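(* Let $N\geq 2$ and $\theta\in\Theta$. Suppose $(X_{1:T},\mathbf{S}_{1},\dots,\mathbf{S}_{T})$ is distributed according to $\pi_{\theta}^{N}$, and run the backward sampling procedure (described in the context) on $\mathbf{S}_1,\dots,\mathbf{S}_T$. For any step $m\in\{T,T-1,\dots,1\}$ of the procedure, let $X'_{1:T}$ be the trajectory obtained at step $m$, i.e. $X'_{1:T}=(X'_{1:m},X'_{m+1:T})$ where $X'_{1:m}$ is the path drawn from $\mathbf{S}_m$ at step $m$ and $X'_{m+1:T}$ the components retained at the earlier steps. Then $X'_{1:T}$ is distributed according to $p_{\theta}(x_{1:T}|y_{1:T})$.
   Context: Model: $\mathcal{X}=\{1,\dots,|\mathcal{X}|\}$ is a finite set; each $\mathcal{X}^n$ is ordered lexicographically; $\mathcal{P}(\mathcal{X}^n)$ denotes the set of subsets of $\mathcal{X}^n$. $\Theta$ is a parameter space with prior density $p(\theta)$. For each $\theta\in\Theta$, a latent discrete process satisfies $X_1\sim\nu_\theta$ and $X_n|(X_{1:n-1}=x_{1:n-1})\sim f_\theta(\cdot|x_{1:n-1})$; conditional on $X_{1:T}=x_{1:T}$, $Z_0\sim\mathcal{N}(m_0,\Sigma_0)$, $Z_n=A_\theta(X_n)Z_{n-1}+B_\theta(X_n)V_n+F_\theta(X_n)u_n$, $Y_n=C_\theta(X_n)Z_n+D_\theta(X_n)W_n+G_\theta(X_n)u_n$, with $V_n,W_n$ i.i.d. standard Gaussian vectors, given matrices and known inputs $u_n$. Observations $y_{1:T}$ are fixed. $g_\theta(y_n|y_{1:n-1},x_{1:n})$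 denotes the conditional predictive density of $Y_n$ given $y_{1:n-1}$ and $X_{1:n}=x_{1:n}$ (with $g_\theta(y_1|x_1)$ for $n=1$); $p_\theta(x_{1:n}|y_{1:n})$, $p_\theta(x_{n+1:T}|x_{1:n})$, $p_\theta(y_{n+1:T}|y_{1:n},x_{1:T})$ and $p(\theta,x_{1:T}|y_{1:T})\propto p(\theta)p_\theta(x_{1:T})p_\theta(y_{1:T}|x_{1:T})$ are the corresponding conditional densities. Standing assumption: for every $n\le T$ and $\theta$, the support of $p_\theta(x_{1:n}|y_{1:n})$ is all of $\mathcal{X}^n$. Discrete particle filter (DPF) with parameter $N$ at $\theta$: set $\mathbf{S}_1=\mathcal{X}$, $\overline{w}_1^\theta(x_1)=\nu_\theta(x_1)g_\theta(y_1|x_1)$, $W_1^\theta$ its normalisation over $\mathcal{X}$. For $n=2,\dots,T$: if $|\mathbf{S}_{n-1}|\le N$ set $C_{n-1}=\infty$, otherwise let $C_{n-1}$ be the unique solution of $\sum_{x_{1:n-1}\in\mathbf{S}_{n-1}}1\wedge C_{n-1}W_{n-1}^\theta(x_{1:n-1})=N$. Keep the $L_{n-1}$ trajectories of $\mathbf{S}_{n-1}$ with weight strictly greater than $1/C_{n-1}$; apply stratified resampling to the remaining trajectories to obtain $N-L_{n-1}$ survivors: normalise their weights, label them $x^{(1)},x^{(2)},\dots$ in lexicographic order with normalised weights $\widehat W(x^{(i)})$, let $Q(i)=\sum_{j\le i}\widehat W(x^{(j)})$, $Q(0)=0$, draw $U_1$ uniform on $[0,1/(N-L_{n-1})]$,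 set $U_j=U_1+(j-1)/(N-L_{n-1})$, and let $x^{(i)}$ survive iff $Q(i-1)<U_j\le Q(i)$ for some $j$. Let $\mathbf{S}'_{n-1}$ be the kept and surviving trajectories, $\mathbf{S}_n=\mathbf{S}'_{n-1}\times\mathcal{X}$, and for $x_{1:n}\in\mathbf{S}_n$, $\overline{w}_n^\theta(x_{1:n})=f_\theta(x_n|x_{1:n-1})g_\theta(y_n|y_{1:n-1},x_{1:n})\frac{W^\theta_{n-1}(x_{1:n-1})}{1\wedge C_{n-1}W^\theta_{n-1}(x_{1:n-1})}$, $W_n^\theta$ its normalisation over $\mathbf{S}_n$; weights are set to $0$ outside $\mathbf{S}_n$. The weights $\mathbf{w}^\theta_n=\{w^\theta_n(x_{1:n})\}$ are deterministic functions of $\mathbf{s}_1,\dots,\mathbf{s}_n$. Let $r_n^N(\cdot|\mathbf{w}^\theta_{n-1})$ be the conditional law of $\mathbf{S}_n$ given $\mathbf{W}^\theta_{n-1}=\mathbf{w}^\theta_{n-1}$ ($r_1^N$ the point mass at $\mathcal{X}$), which satisfies $r_n^N(x_{1:n}\in\mathbf{s}_n|\mathbf{w}^\theta_{n-1}):=\sum_{\mathbf{s}_n'\ni x_{1:n}}r_n^N(\mathbf{s}'_n|\mathbf{w}^\theta_{n-1})=1\wedge C_{n-1}w^\theta_{n-1}(x_{1:n-1})$; the joint law of the supports is $\psi^N_\theta(\mathbf{s}_1,\dots,\mathbf{s}_T)=r_1^N(\mathbf{s}_1)\prod_{n=2}^T r_n^N(\mathbf{s}_n|\mathbf{w}^\theta_{n-1})$.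 Extended target: $\pi^N(\theta,x_{1:T},\mathbf{s}_1,\dots,\mathbf{s}_T)=p(\theta,x_{1:T}|y_{1:T})\Big\{\prod_{n=2}^T\mathbb{I}[x_{1:n}\in\mathbf{s}_n]\Big\}\frac{\psi^N_\theta(\mathbf{s}_1,\dots,\mathbf{s}_T)}{\prod_{n=2}^T r_n^N(x_{1:n}\in\mathbf{s}_n|\mathbf{w}^\theta_{n-1})}$, and $\pi^N_\theta(x_{1:T},\mathbf{s}_1,\dots,\mathbf{s}_T)$ denotes its conditional density given $\theta$. Backward sampling on $\mathbf{s}_1,\dots,\mathbf{s}_T$ (with the associated weights $W^\theta_n$): at step $n=T$, draw a path $X^\ast_{1:T}$ from the distribution on $\mathbf{s}_T$ with probabilities $W^\theta_T(x_{1:T})$ and set $X'_T=X^\ast_T$ (the trajectory obtained at step $T$ is $X^\ast_{1:T}$). At steps $n=T-1,\dots,1$: given $X'_{n+1:T}$, draw a path $X'_{1:n}$ from the distribution on $\mathbf{s}_n$ with probabilities proportional to $V^\theta_n(x_{1:n}|X'_{n+1:T})=W^\theta_n(x_{1:n})\,p_\theta(X'_{n+1:T}|x_{1:n})\,p_\theta(y_{n+1:T}|y_{1:n},x_{1:n},X'_{n+1:T})$; if $n>1$ retain only its last component $X'_n$, otherwise output $X'_{1:T}$. *)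

theory Defs
  imports "HOL-Analysis.Analysis" "HOL-Library.List_Lexorder"
begin

text \<open>
Conventions (fixed theta throughout; all theta-dependence is absorbed into nu, f, g):
  state space X = {1..K}; a path x_{1:n} is a nat list of length n with entries in {1..K};
  paths are ordered lexicographically (List_Lexorder; lists of equal length);
  nu a       = nu_theta(a);
  f xs a     = f_theta(a | xs)      (xs = x_{1:n-1}, a = x_n);
  g n xs     = g_theta(y_n | y_{1:n-1}, x_{1:n}) with xs = x_{1:n} (observations y fixed);
  supports S_1..S_T are stored in a list ss of length T with ss!(n-1) = S_n.
\<close>

definition paths :: "nat \<Rightarrow> nat \<Rightarrow> nat list set" where
  "paths K n = {xs. length xs = n \<and> set xs \<subseteq> {1..K}}"

definition ext :: "nat \<Rightarrow> nat list set \<Rightarrow> nat list set" where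
  "ext K s = {z @ [a] | z a. z \<in> s \<and> a \<in> {1..K}}"

text \<open>unnormalised filtering density p_theta(x_{1:n}, y_{1:n}) (prefix of x of length n)\<close>
definition joint :: "(nat \<Rightarrow> real) \<Rightarrow> (nat list \<Rightarrow> nat \<Rightarrow> real) \<Rightarrow> (nat \<Rightarrow> nat list \<Rightarrow> real)
   \<Rightarrow> nat \<Rightarrow> nat list \<Rightarrow> real" where
  "joint nu f g n x = nu (x!0) * g 1 (take 1 x) *
     (\<Prod>k\<in>{2..n}. f (take (k-1) x) (x!(k-1)) * g k (take k x))"

definition post :: "nat \<Rightarrow> (nat \<Rightarrow> real) \<Rightarrow> (nat list \<Rightarrow> nat \<Rightarrow> real) \<Rightarrow> (nat \<Rightarrow> nat list \<Rightarrow> real)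
   \<Rightarrow> nat \<Rightarrow> nat list \<Rightarrow> real" where
  "post K nu f g T x = joint nu f g T x / (\<Sum>u\<in>paths K T. joint nu f g T u)"

definition pfut_x :: "(nat list \<Rightarrow> nat \<Rightarrow> real) \<Rightarrow> nat \<Rightarrow> nat \<Rightarrow> nat list \<Rightarrow> real" where
  "pfut_x f T n x = (\<Prod>k\<in>{n+1..T}. f (take (k-1) x) (x!(k-1)))"

definition pfut_y :: "(nat \<Rightarrow> nat list \<Rightarrow> real) \<Rightarrow> nat \<Rightarrow> nat \<Rightarrow> nat list \<Rightarrow> real" where
  "pfut_y g T n x = (\<Prod>k\<in>{n+1..T}. g k (take k x))"

text \<open>The threshold C (when |S| > N): the unique solution of sum_{z in S} 1 /\ C w(z) = N\<close>
definition Cthr :: "nat \<Rightarrow> (nat list \<Rightarrow> real) \<Rightarrow> nat list set \<Rightarrow> real" where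
  "Cthr N w s = (THE c. c > 0 \<and> (\<Sum>z\<in>s. min 1 (c * w z)) = real N)"

text \<open>1 /\ C w(z), with C = infinity (value 1) when |S| <= N\<close>
definition keepp :: "nat \<Rightarrow> (nat list \<Rightarrow> real) \<Rightarrow> nat list set \<Rightarrow> nat list \<Rightarrow> real" where
  "keepp N w s z = (if card s \<le> N then 1 else min 1 (Cthr N w s * w z))"

fun Wt :: "nat \<Rightarrow> nat \<Rightarrow> (nat \<Rightarrow> real) \<Rightarrow> (nat list \<Rightarrow> nat \<Rightarrow> real) \<Rightarrow> (nat \<Rightarrow> nat list \<Rightarrow> real)
   \<Rightarrow> nat list set list \<Rightarrow> nat \<Rightarrow> nat list \<Rightarrow> real" where
  "Wt K N nu f g ss 0 z = 0"
| "Wt K N nu f g ss (Suc 0) z =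
     (if z \<in> paths K 1 then nu (hd z) * g 1 z / (\<Sum>u\<in>paths K 1. nu (hd u) * g 1 u) else 0)"
| "Wt K N nu f g ss (Suc (Suc n)) z =
     (let w = Wt K N nu f g ss (Suc n); s = ss!n; s2 = ss!(Suc n);
          wb = (\<lambda>u. f (butlast u) (last u) * g (Suc (Suc n)) u * w (butlast u) / keepp N w s (butlast u))
      in if z \<in> s2 then wb z / (\<Sum>u\<in>s2. wb u) else 0)"

text \<open>Conditional law r_n^N(s' | w_{n-1}) of S_n given the previous support s = S_{n-1} and
  its weights w = W_{n-1}: keep paths with weight > 1/C, stratified resampling of the rest
  (U_1 uniform on [0, 1/M], M = N - L), then extend by X.\<close>
definition rn :: "nat \<Rightarrow> nat \<Rightarrow> (nat list \<Rightarrow> real) \<Rightarrow> nat list set \<Rightarrow> nat list set \<Rightarrow> real" where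
  "rn K N w s s' =
    (if card s \<le> N then (if s' = ext K s then 1 else 0) else
     (let C = Cthr N w s;
          Kp = {z \<in> s. w z > 1 / C};
          M = real (N - card Kp);
          R = s - Kp;
          xs = sorted_list_of_set R;
          Wh = (\<lambda>z. w z / (\<Sum>u\<in>R. w u));
          Q = (\<lambda>i::nat. \<Sum>j<i. Wh (xs!j));
          surv = (\<lambda>u::real. {xs!i | i. i < length xs \<and>
                     (\<exists>j::nat. real j < M \<and> Q i < u + real j / M \<and> u + real j / M \<le> Q (Suc i))})
      in M * measure lborel {u \<in> {0..1/M}. ext K (Kp \<union> surv u) = s'}))"

definition rin :: "nat \<Rightarrow> nat \<Rightarrow> (nat list \<Rightarrow> real) \<Rightarrow> nat list set \<Rightarrow> nat \<Rightarrow> nat list \<Rightarrow> real" where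
  "rin K N w s n z = (\<Sum>s'\<in>{s'. s' \<subseteq> paths K n \<and> z \<in> s'}. rn K N w s s')"

definition Supps :: "nat \<Rightarrow> nat \<Rightarrow> nat list set list set" where
  "Supps K T = {ss. length ss = T \<and> (\<forall>i<T. ss!i \<subseteq> paths K (Suc i))}"

definition psi :: "nat \<Rightarrow> nat \<Rightarrow> (nat \<Rightarrow> real) \<Rightarrow> (nat list \<Rightarrow> nat \<Rightarrow> real) \<Rightarrow> (nat \<Rightarrow> nat list \<Rightarrow> real)
   \<Rightarrow> nat \<Rightarrow> nat list set list \<Rightarrow> real" where
  "psi K N nu f g T ss = (if ss!0 = paths K 1 then 1 else 0) *
     (\<Prod>n\<in>{2..T}. rn K N (Wt K N nu f g ss (n-1)) (ss!(n-2)) (ss!(n-1)))"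

definition piN :: "nat \<Rightarrow> nat \<Rightarrow> (nat \<Rightarrow> real) \<Rightarrow> (nat list \<Rightarrow> nat \<Rightarrow> real) \<Rightarrow> (nat \<Rightarrow> nat list \<Rightarrow> real)
   \<Rightarrow> nat \<Rightarrow> nat list \<Rightarrow> nat list set list \<Rightarrow> real" where
  "piN K N nu f g T x ss =
     post K nu f g T x *
     (\<Prod>n\<in>{2..T}. if take n x \<in> ss!(n-1) then 1 else 0) *
     psi K N nu f g T ss /
     (\<Prod>n\<in>{2..T}. rin K N (Wt K N nu f g ss (n-1)) (ss!(n-2)) n (take n x))"

definition Vb :: "nat \<Rightarrow> nat \<Rightarrow> (nat \<Rightarrow> real) \<Rightarrow> (nat list \<Rightarrow> nat \<Rightarrow> real) \<Rightarrow> (nat \<Rightarrow> nat list \<Rightarrow> real)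
   \<Rightarrow> nat \<Rightarrow> nat list set list \<Rightarrow> nat \<Rightarrow> nat list \<Rightarrow> nat list \<Rightarrow> real" where
  "Vb K N nu f g T ss n tr z =
     Wt K N nu f g ss n z * pfut_x f T n (z @ tr) * pfut_y g T n (z @ tr)"

text \<open>Probability (given the supports) that the backward sampler retains components
  X'_{T-j+1:T} = tl, for tl of length j \<ge> 1.\<close>
fun btail :: "nat \<Rightarrow> nat \<Rightarrow> (nat \<Rightarrow> real) \<Rightarrow> (nat list \<Rightarrow> nat \<Rightarrow> real) \<Rightarrow> (nat \<Rightarrow> nat list \<Rightarrow> real)
   \<Rightarrow> nat \<Rightarrow> nat list set list \<Rightarrow> nat \<Rightarrow> nat list \<Rightarrow> real" where
  "btail K N nu f g T ss 0 tr = (if tr = [] then 1 else 0)"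
| "btail K N nu f g T ss (Suc 0) tr =
     (\<Sum>z\<in>ss!(T-1). if last z = hd tr then Wt K N nu f g ss T z else 0)"
| "btail K N nu f g T ss (Suc (Suc j)) tr =
     (let n = T - Suc j; rest = tl tr;
          V = Vb K N nu f g T ss n rest
      in btail K N nu f g T ss (Suc j) rest *
         (\<Sum>z\<in>ss!(n-1). if last z = hd tr then V z / (\<Sum>u\<in>ss!(n-1). V u) else 0))"

text \<open>Probability (given the supports) that the trajectory obtained at step m of the
  backward sampler equals x (x of length T).\<close>
definition bsout :: "nat \<Rightarrow> nat \<Rightarrow> (nat \<Rightarrow> real) \<Rightarrow> (nat list \<Rightarrow> nat \<Rightarrow> real) \<Rightarrow> (nat \<Rightarrow> nat list \<Rightarrow> real)
   \<Rightarrow> nat \<Rightarrow> nat list set list \<Rightarrow> nat \<Rightarrow> nat list \<Rightarrow> real" where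
  "bsout K N nu f g T ss m x =
    (if m = T then (if x \<in> ss!(T-1) then Wt K N nu f g ss T x else 0)
     else (let V = Vb K N nu f g T ss m (drop m x)
           in btail K N nu f g T ss (T - m) (drop m x) *
              (if take m x \<in> ss!(m-1) then V (take m x) / (\<Sum>u\<in>ss!(m-1). V u) else 0)))"

end

theory Submission
  imports Defs
begin

definition clampf :: "real \<Rightarrow> real \<Rightarrow> real" where
  "clampf h t = max 0 (min h t)"

lemma clamp_tele:
  assumes "h > 0"
  shows "(\<Sum>j<m. clampf h (t - real j * h)) = clampf (real m * h) t"
proof (induction m)
  case 0 then show ?case by (simp add: clampf_def)
next
  case (Suc m)
  have "(\<Sum>j<Suc m. clampf h (t - real j * h)) = clampf (real m * h) t + clampf h (t - real m * h)"
    using Suc by simp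
  also have "\<dots> = clampf (real (Suc m) * h) t"
  proof -
    have hm: "0 \<le> h * real m" using assms by simp
    show ?thesis using assms unfolding clampf_def max_def min_def
      by (auto simp: algebra_simps) (use hm in linarith)+
  qed
  finally show ?case .
qed

lemma measure_Icc_Ioc:
  fixes h \<alpha> \<beta> :: real
  assumes "h > 0" "\<alpha> \<le> \<beta>"
  shows "measure lborel ({0..h} \<inter> {\<alpha><..\<beta>}) = clampf h \<beta> - clampf h \<alpha>"
proof (cases "\<alpha> < 0")
  case True
  then have "{0..h} \<inter> {\<alpha><..\<beta>} = {0..min h \<beta>}" by auto
  then show ?thesis using True assms by (auto simp: clampf_def max_def min_def)
next
  case False
  then have "{0..h} \<inter> {\<alpha><..\<beta>} = {\<alpha><..min h \<beta>}" by auto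
  then show ?thesis using False assms by (auto simp: clampf_def max_def min_def)
qed

lemma strat_measure:
  fixes a b :: real and m :: nat
  assumes m: "m \<ge> 1" and ab: "0 \<le> a" "a \<le> b" "b \<le> 1" "b - a \<le> 1 / real m"
  shows "measure lborel {u \<in> {0..1/real m}. \<exists>j::nat. real j < real m \<and> a < u + real j / real m \<and> u + real j / real m \<le> b} = b - a"
proof -
  define h where "h = 1 / real m"
  have h: "h > 0" using m by (simp add: h_def)
  define B where "B j = {0..h} \<inter> {a - real j * h<..b - real j * h}" for j :: nat
  have eq: "{u \<in> {0..1/real m}. \<exists>j::nat. real j < real m \<and> a < u + real j / real m \<and> u + real j / real m \<le> b}
      = (\<Union>j\<in>{..<m}. B j)"
    by (auto simp: B_def h_def divide_inverse algebra_simps)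
  have disj: "disjoint_family_on B {..<m}"
    unfolding disjoint_family_on_def
  proof (intro ballI impI)
    fix i j assume ij: "i \<in> {..<m}" "j \<in> {..<m}" "i \<noteq> j"
    show "B i \<inter> B j = {}"
    proof (rule ccontr)
      assume "B i \<inter> B j \<noteq> {}"
      then obtain u where u: "u \<in> B i" "u \<in> B j" by blast
      have d: "\<bar>real i - real j\<bar> \<ge> 1" using ij by linarith
      have hb: "b - a \<le> h" using ab by (simp add: h_def)
      have "\<bar>real i * h - real j * h\<bar> < b - a" using u by (auto simp: B_def abs_if)
      moreover have "\<bar>real i * h - real j * h\<bar> = \<bar>real i - real j\<bar> * h"
        using h by (simp add: abs_mult left_diff_distrib[symmetric])
      moreover have "\<bar>real i - real j\<bar> * h \<ge> h" using d h by simp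
      ultimately show False using hb by linarith
    qed
  qed
  have "measure lborel (\<Union>j\<in>{..<m}. B j) = (\<Sum>j<m. measure lborel (B j))"
  proof (rule measure_finite_Union)
    show "disjoint_family_on B {..<m}" by (rule disj)
    fix j
    have "emeasure lborel (B j) \<le> emeasure lborel {0..h}"
      by (rule emeasure_mono) (auto simp: B_def)
    then show "emeasure lborel (B j) \<noteq> \<infinity>"
      using h by (auto simp: emeasure_lborel_Icc_eq top_unique)
  qed (auto simp: B_def)
  also have "\<dots> = (\<Sum>j<m. clampf h (b - real j * h) - clampf h (a - real j * h))"
    using ab h by (intro sum.cong refl) (simp add: B_def measure_Icc_Ioc)
  also have "\<dots> = clampf (real m * h) b - clampf (real m * h) a"
    by (simp add: sum_subtractf clamp_tele[OF h])
  also have "\<dots> = b - a" using m ab by (simp add: h_def clampf_def)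
  finally show ?thesis using eq by simp
qed

lemma Cthr_prop:
  fixes w :: "nat list \<Rightarrow> real"
  assumes fin: "finite s" and card: "card s > N" and N: "N \<ge> 1" and pos: "\<And>z. z \<in> s \<Longrightarrow> w z > 0"
  shows "Cthr N w s > 0 \<and> (\<Sum>z\<in>s. min 1 (Cthr N w s * w z)) = real N"
proof -
  define h where "h c = (\<Sum>z\<in>s. min 1 (c * w z))" for c :: real
  define b where "b = (\<Sum>z\<in>s. 1 / w z)"
  have bge: "b * w z \<ge> 1" if "z \<in> s" for z
  proof -
    have "1 / w z \<le> b" unfolding b_def
      by (rule member_le_sum) (use that fin pos in \<open>auto simp: less_imp_le\<close>)
    then show ?thesis using pos[OF that] by (simp add: field_simps)
  qed
  have b0: "b \<ge> 0" unfolding b_def using pos by (auto intro: sum_nonneg simp: less_imp_le)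
  have h0: "h 0 = 0" by (simp add: h_def)
  have hb: "h b = real (card s)" unfolding h_def using bge by (simp add: min_def)
  have cont: "continuous_on {0..b} h" unfolding h_def by (intro continuous_intros)
  obtain c where c: "0 \<le> c" "c \<le> b" "h c = real N"
    using IVT'[of h 0 "real N" b, OF _ _ b0 cont] h0 hb card by auto
  have cpos: "c > 0" using c h0 N by (cases "c = 0") auto
  have uniq: "c2 = c1" if c1: "c1 > 0" "h c1 = real N" and c2: "c2 > 0" "h c2 = real N" for c1 c2
  proof (rule ccontr)
    assume ne: "c2 \<noteq> c1"
    have main: False if lt: "a1 < a2" "h a1 = real N" "h a2 = real N" "a1 > 0" for a1 a2
    proof -
      have le: "min 1 (a1 * w z) \<le> min 1 (a2 * w z)" if "z \<in> s" for z
      proof -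
        have "a1 * w z < a2 * w z" using lt pos[OF that] by simp
        then show ?thesis unfolding min_def by simp
      qed
      show False
      proof (cases "\<exists>z\<in>s. min 1 (a1 * w z) < min 1 (a2 * w z)")
        case True
        have "h a1 < h a2" unfolding h_def
          using le True by (intro sum_strict_mono_ex1[OF fin]) blast+
        then show False using lt by simp
      next
        case False
        then have eq: "\<forall>z\<in>s. min 1 (a1 * w z) = 1"
        proof (intro ballI)
          fix z assume z: "z \<in> s"
          have lt2: "a1 * w z < a2 * w z" using lt pos[OF z] by simp
          have nlt: "\<not> min 1 (a1 * w z) < min 1 (a2 * w z)" using False z by blast
          show "min 1 (a1 * w z) = 1"
          proof (rule ccontr)
            assume "min 1 (a1 * w z) \<noteq> 1"
            then have "a1 * w z < 1" by (simp add: min_def split: if_splits)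
            then have "min 1 (a1 * w z) < min 1 (a2 * w z)" using lt2 by simp
            then show False using nlt by simp
          qed
        qed
        then have "h a1 = real (card s)" unfolding h_def by simp
        then show False using lt card by simp
      qed
    qed
    show False using ne main[of c1 c2] main[of c2 c1] c1 c2 by (cases "c1 < c2") auto
  qed
  have ex1: "\<exists>!c. c > 0 \<and> (\<Sum>z\<in>s. min 1 (c * w z)) = real N"
    using cpos c uniq unfolding h_def by blast
  have "Cthr N w s > 0 \<and> (\<Sum>z\<in>s. min 1 (Cthr N w s * w z)) = real N"
    unfolding Cthr_def by (rule theI'[OF ex1])
  then show ?thesis .
qed

lemma ext_mem: "z @ [a] \<in> ext K B \<longleftrightarrow> z \<in> B \<and> a \<in> {1..K}"
  by (auto simp: ext_def)

lemma ext_memD: "y \<in> ext K B \<Longrightarrow> butlast y \<in> B \<and> y = butlast y @ [last y] \<and> last y \<in> {1..K}"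
  by (auto simp: ext_def)

lemma ext_mem_iff: "y \<in> ext K B \<longleftrightarrow> y \<noteq> [] \<and> butlast y \<in> B \<and> last y \<in> {1..K}"
  by (auto simp: ext_def) (metis append_butlast_last_id)

lemma ext_paths: assumes "B \<subseteq> paths K n" shows "ext K B \<subseteq> paths K (Suc n)"
proof
  fix y assume "y \<in> ext K B"
  then obtain z a where "y = z @ [a]" "z \<in> B" "a \<in> {1..K}" by (auto simp: ext_def)
  then show "y \<in> paths K (Suc n)" using assms by (auto simp: paths_def)
qed

lemma finite_paths: "finite (paths K n)"
proof -
  have "paths K n \<subseteq> {xs. set xs \<subseteq> {1..K} \<and> length xs = n}" by (auto simp: paths_def)
  then show ?thesis using finite_lists_length_eq[of "{1..K}" n] by (auto intro: finite_subset)
qed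

lemma rn_nonneg: "rn K N w s s' \<ge> 0"
  by (simp add: rn_def Let_def)

lemma rn_pos_ext:
  assumes fin: "finite s" and "rn K N w s s' \<noteq> 0"
  shows "\<exists>A \<subseteq> s. s' = ext K A"
proof (cases "card s \<le> N")
  case True then show ?thesis using assms by (auto simp: rn_def split: if_splits)
next
  case False
  define C where "C = Cthr N w s"
  define Kp where "Kp = {z \<in> s. w z > 1 / C}"
  define M where "M = real (N - card Kp)"
  define R where "R = s - Kp"
  define xs where "xs = sorted_list_of_set R"
  define Wh where "Wh = (\<lambda>z. w z / (\<Sum>u\<in>R. w u))"
  define Q where "Q = (\<lambda>i::nat. \<Sum>j<i. Wh (xs!j))"
  define surv where "surv = (\<lambda>u::real. {xs!i | i. i < length xs \<and>
                     (\<exists>j::nat. real j < M \<and> Q i < u + real j / M \<and> u + real j / M \<le> Q (Suc i))})"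
  have eq: "rn K N w s s' = M * measure lborel {u \<in> {0..1/M}. ext K (Kp \<union> surv u) = s'}"
    using False unfolding rn_def Let_def C_def Kp_def M_def R_def xs_def Wh_def Q_def surv_def by simp
  have "{u \<in> {0..1/M}. ext K (Kp \<union> surv u) = s'} \<noteq> {}"
  proof
    assume e: "{u \<in> {0..1/M}. ext K (Kp \<union> surv u) = s'} = {}"
    have "rn K N w s s' = M * measure lborel ({}::real set)" by (simp only: eq e)
    then have "rn K N w s s' = 0" by simp
    then show False using assms by simp
  qed
  then obtain u where u: "ext K (Kp \<union> surv u) = s'" by auto
  have "surv u \<subseteq> R"
  proof
    fix v assume "v \<in> surv u"
    then obtain i where "i < length xs" "v = xs ! i" unfolding surv_def by auto
    then have "v \<in> set xs" by auto
    then show "v \<in> R" unfolding xs_def using fin by (metis R_def finite_Diff set_sorted_list_of_set)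
  qed
  then have "Kp \<union> surv u \<subseteq> s" unfolding Kp_def R_def by auto
  then show ?thesis using u by blast
qed

lemma rin_keep:
  assumes K: "K \<ge> 1" and N: "N \<ge> 1" and fin: "finite s" and sub: "s \<subseteq> paths K n"
    and pos: "\<And>z. z \<in> s \<Longrightarrow> w z > 0" and z: "z \<in> s" and a: "a \<in> {1..K}"
  shows "rin K N w s (Suc n) (z @ [a]) = keepp N w s z"
proof (cases "card s \<le> N")
  case True
  have mem: "ext K s \<in> {s'. s' \<subseteq> paths K (Suc n) \<and> z @ [a] \<in> s'}"
    using ext_paths[OF sub] z a by (auto simp: ext_mem)
  have fS: "finite {s'. s' \<subseteq> paths K (Suc n) \<and> z @ [a] \<in> s'}"
    by (rule finite_subset[of _ "Pow (paths K (Suc n))"]) (auto simp: finite_paths)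
  have "rin K N w s (Suc n) (z @ [a]) = (\<Sum>s'\<in>{s'. s' \<subseteq> paths K (Suc n) \<and> z @ [a] \<in> s'}. if s' = ext K s then 1 else 0)"
    unfolding rin_def rn_def using True by (simp only: if_True)
  also have "\<dots> = 1" using mem fS by (simp add: sum.delta')
  finally show ?thesis using True by (simp add: keepp_def)
next
  case False
  define C where "C = Cthr N w s"
  define Kp where "Kp = {z \<in> s. w z > 1 / C}"
  define M where "M = real (N - card Kp)"
  define R where "R = s - Kp"
  define xs where "xs = sorted_list_of_set R"
  define Wh where "Wh = (\<lambda>z. w z / (\<Sum>u\<in>R. w u))"
  define Q where "Q = (\<lambda>i::nat. \<Sum>j<i. Wh (xs!j))"
  define P where "P = (\<lambda>i u. \<exists>j::nat. real j < M \<and> Q i < u + real j / M \<and> u + real j / M \<le> Q (Suc i))"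
  define surv where "surv = (\<lambda>u::real. {xs!i | i. i < length xs \<and>
                     (\<exists>j::nat. real j < M \<and> Q i < u + real j / M \<and> u + real j / M \<le> Q (Suc i))})"
  define F where "F = (\<lambda>u. ext K (Kp \<union> surv u))"
  define A where "A = (\<lambda>s'. {u \<in> {0..1/M}. F u = s'})"
  define S' where "S' = {s'. s' \<subseteq> paths K (Suc n) \<and> z @ [a] \<in> s'}"
  have rn_eq: "rn K N w s s' = M * measure lborel (A s')" for s'
    unfolding rn_def Let_def A_def F_def surv_def Q_def Wh_def xs_def R_def M_def Kp_def C_def
    using False by (simp only: if_False)
  have card: "card s > N" using False by simp
  from Cthr_prop[OF fin card N pos] have Cpos: "C > 0" and Csum: "(\<Sum>z\<in>s. min 1 (C * w z)) = real N"
    by (auto simp: C_def)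
  have Kp_iff: "v \<in> Kp \<longleftrightarrow> v \<in> s \<and> C * w v > 1" for v
  proof -
    have "1 / C < w v \<longleftrightarrow> 1 < w v * C" using Cpos by (simp add: divide_less_eq)
    then show ?thesis unfolding Kp_def by (auto simp: mult.commute)
  qed
  have KpS: "Kp \<subseteq> s" by (auto simp: Kp_def)
  have finKp: "finite Kp" using KpS fin by (rule finite_subset)
  have finR: "finite R" unfolding R_def using fin by simp
  have e1: "(\<Sum>z\<in>s. min 1 (C * w z)) = (\<Sum>z\<in>Kp. min 1 (C * w z)) + (\<Sum>z\<in>R. min 1 (C * w z))"
    unfolding R_def using sum.subset_diff[OF KpS fin, of "\<lambda>z. min 1 (C * w z)"] by (simp add: add.commute)
  have e2: "(\<Sum>z\<in>Kp. min 1 (C * w z)) = real (card Kp)"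
  proof -
    have "(\<Sum>z\<in>Kp. min 1 (C * w z)) = (\<Sum>z\<in>Kp. 1)"
    proof (rule sum.cong[OF refl])
      fix z assume "z \<in> Kp"
      then have "C * w z > 1" unfolding Kp_iff by blast
      then show "min 1 (C * w z) = 1" by simp
    qed
    then show ?thesis by simp
  qed
  have e3: "(\<Sum>z\<in>R. min 1 (C * w z)) = C * (\<Sum>z\<in>R. w z)"
    unfolding sum_distrib_left
  proof (rule sum.cong[OF refl])
    fix z assume "z \<in> R"
    then have "z \<in> s" "z \<notin> Kp" unfolding R_def by auto
    then have "\<not> C * w z > 1" using Kp_iff[of z] by blast
    then show "min 1 (C * w z) = C * w z" by simp
  qed
  have eqN: "real (card Kp) + C * (\<Sum>z\<in>R. w z) = real N" using Csum e1 e2 e3 by simp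
  have Rne: "R \<noteq> {}"
  proof
    assume R0: "R = {}"
    then have "s = Kp" using KpS unfolding R_def by blast
    then have "card s = card Kp" by simp
    moreover have "(\<Sum>z\<in>R. w z) = 0" using R0 by simp
    ultimately show False using eqN card by simp
  qed
  have SRpos: "(\<Sum>z\<in>R. w z) > 0"
  proof (rule sum_pos[OF finR Rne])
    fix v assume "v \<in> R" then have "v \<in> s" unfolding R_def by blast
    then show "w v > 0" by (rule pos)
  qed
  have CS: "C * (\<Sum>z\<in>R. w z) > 0" using Cpos SRpos by simp
  have cardlt: "card Kp < N" using eqN CS by linarith
  have Mval: "M = real N - real (card Kp)" unfolding M_def using cardlt by (simp add: of_nat_diff)
  have M1: "M \<ge> 1" using cardlt Mval by linarith
  have SR: "(\<Sum>z\<in>R. w z) = M / C" using eqN Mval Cpos by (simp add: field_simps)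
  have Wh_val: "Wh v = C * w v / M" for v
    unfolding Wh_def SR using Cpos M1 by (simp add: field_simps)
  define mm where "mm = N - card Kp"
  have mm: "M = real mm" "mm \<ge> 1" using cardlt unfolding M_def mm_def by auto
  have dist: "distinct xs" and setxs: "set xs = R" using finR by (auto simp: xs_def)
  have lenxs: "length xs = card R" using finR by (simp add: xs_def)
  have Wh_nonneg: "Wh v \<ge> 0" if "v \<in> R" for v
  proof -
    have "v \<in> s" using that unfolding R_def by blast
    then have "w v > 0" by (rule pos)
    then show ?thesis unfolding Wh_val using Cpos M1 by simp
  qed
  have Qmono: "Q i \<le> Q i'" if "i \<le> i'" "i' \<le> length xs" for i i'
    unfolding Q_def
  proof (rule sum_mono2)
    show "{..<i} \<subseteq> {..<i'}" using that by auto
    fix j assume "j \<in> {..<i'} - {..<i}"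
    then have "xs ! j \<in> R" using that setxs nth_mem by fastforce
    then show "0 \<le> Wh (xs ! j)" by (rule Wh_nonneg)
  qed simp
  have Q0: "Q 0 = 0" by (simp add: Q_def)
  have Qsum: "(\<Sum>j<length xs. g (xs ! j)) = (\<Sum>v\<in>set xs. g v)" for g :: "nat list \<Rightarrow> real"
    using dist by (simp add: sum_list_distinct_conv_sum_set[symmetric] sum_list_sum_nth atLeast0LessThan)
  have Qlen: "Q (length xs) = 1"
  proof -
    have "Q (length xs) = (\<Sum>v\<in>R. Wh v)" unfolding Q_def Qsum setxs ..
    also have "\<dots> = (\<Sum>v\<in>R. w v) / (\<Sum>u\<in>R. w u)" unfolding Wh_def by (rule sum_divide_distrib[symmetric])
    also have "\<dots> = 1" using SRpos by simp
    finally show ?thesis .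
  qed
  have Qstep: "Q (Suc i) - Q i = Wh (xs ! i)" for i unfolding Q_def by simp
  have surv_mem: "v \<in> surv u \<longleftrightarrow> (\<exists>i\<in>{..<length xs}. v = xs ! i \<and> P i u)" for v u
    unfolding surv_def P_def by auto
  have survR: "surv u \<subseteq> R" for u
  proof
    fix v assume "v \<in> surv u"
    then obtain i where "i < length xs" "v = xs ! i" unfolding surv_mem by auto
    then show "v \<in> R" using setxs nth_mem by blast
  qed
  have Fsub: "F u \<subseteq> paths K (Suc n)" for u
  proof -
    have "Kp \<union> surv u \<subseteq> paths K n" using survR[of u] KpS sub unfolding R_def by blast
    then show ?thesis unfolding F_def by (rule ext_paths)
  qed
  have U_prop: "y \<noteq> [] \<and> last y \<in> {1..K}" if "y \<in> paths K (Suc n)" for y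
  proof -
    have "length y = Suc n" "set y \<subseteq> {1..K}" using that by (auto simp: paths_def)
    then show ?thesis by (metis last_in_set length_0_conv nat.distinct(1) subsetD)
  qed
  have Ameas: "A s' \<in> sets lborel" for s'
  proof (cases "s' \<subseteq> paths K (Suc n)")
    case False
    then have "A s' = {}" unfolding A_def using Fsub by blast
    then show ?thesis by simp
  next
    case True
    define U where "U = paths K (Suc n)"
    have finU: "finite U" unfolding U_def by (rule finite_paths)
    have iff: "F u = s' \<longleftrightarrow> (\<forall>y\<in>U. (y \<in> s') = (butlast y \<in> Kp \<or> (\<exists>i\<in>{..<length xs}. butlast y = xs ! i \<and> P i u)))" for u
    proof -
      have "y \<in> F u \<longleftrightarrow> (butlast y \<in> Kp \<or> (\<exists>i\<in>{..<length xs}. butlast y = xs ! i \<and> P i u))" if "y \<in> U" for y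
        using U_prop[of y] that surv_mem[of "butlast y" u] unfolding U_def F_def ext_mem_iff by blast
      then show ?thesis using Fsub[of u] True unfolding U_def by blast
    qed
    have "Measurable.pred borel (\<lambda>u::real. u \<in> {0..1/M} \<and> (\<forall>y\<in>U. (y \<in> s') = (butlast y \<in> Kp \<or> (\<exists>i\<in>{..<length xs}. butlast y = xs ! i \<and> P i u))))"
      unfolding P_def using finU by measurable
    then have "{u \<in> space borel. u \<in> {0..1/M} \<and> (\<forall>y\<in>U. (y \<in> s') = (butlast y \<in> Kp \<or> (\<exists>i\<in>{..<length xs}. butlast y = xs ! i \<and> P i u)))} \<in> sets borel"
      by (rule predE)
    moreover have "A s' = {u \<in> space borel. u \<in> {0..1/M} \<and> (\<forall>y\<in>U. (y \<in> s') = (butlast y \<in> Kp \<or> (\<exists>i\<in>{..<length xs}. butlast y = xs ! i \<and> P i u)))}"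
      unfolding A_def using iff by auto
    ultimately show ?thesis by simp
  qed
  have finS': "finite S'"
    by (rule finite_subset[of _ "Pow (paths K (Suc n))"]) (auto simp: S'_def finite_paths)
  have "rin K N w s (Suc n) (z @ [a]) = (\<Sum>s'\<in>S'. M * measure lborel (A s'))"
    unfolding rin_def S'_def[symmetric] using rn_eq by simp
  also have "\<dots> = M * (\<Sum>s'\<in>S'. measure lborel (A s'))" by (simp add: sum_distrib_left)
  also have "(\<Sum>s'\<in>S'. measure lborel (A s')) = measure lborel (\<Union>s'\<in>S'. A s')"
  proof (rule measure_finite_Union[symmetric, OF finS'])
    show "A ` S' \<subseteq> sets lborel" using Ameas by blast
    show "disjoint_family_on A S'" unfolding disjoint_family_on_def A_def by auto
    fix s' show "emeasure lborel (A s') \<noteq> \<infinity>"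
    proof -
      have "emeasure lborel (A s') \<le> emeasure lborel {0..1/M}"
        by (rule emeasure_mono) (auto simp: A_def)
      then show ?thesis using M1 by (auto simp: emeasure_lborel_Icc_eq top_unique)
    qed
  qed
  also have "(\<Union>s'\<in>S'. A s') = {u \<in> {0..1/M}. z \<in> Kp \<union> surv u}"
  proof (intro equalityI subsetI)
    fix u assume "u \<in> (\<Union>s'\<in>S'. A s')"
    then obtain s' where "s' \<in> S'" "u \<in> A s'" by blast
    then have "u \<in> {0..1/M}" "z @ [a] \<in> F u" unfolding S'_def A_def by auto
    then show "u \<in> {u \<in> {0..1/M}. z \<in> Kp \<union> surv u}" unfolding F_def ext_mem by auto
  next
    fix u assume "u \<in> {u \<in> {0..1/M}. z \<in> Kp \<union> surv u}"
    then have u: "u \<in> {0..1/M}" "z @ [a] \<in> F u" unfolding F_def ext_mem using a by auto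
    then have "F u \<in> S'" unfolding S'_def using Fsub by auto
    moreover have "u \<in> A (F u)" unfolding A_def using u by auto
    ultimately show "u \<in> (\<Union>s'\<in>S'. A s')" by blast
  qed
  finally have rin_eq: "rin K N w s (Suc n) (z @ [a]) = M * measure lborel {u \<in> {0..1/M}. z \<in> Kp \<union> surv u}" .
  have keep_eq: "keepp N w s z = min 1 (C * w z)" using False unfolding keepp_def C_def by simp
  show ?thesis
  proof (cases "z \<in> Kp")
    case True
    then have "{u \<in> {0..1/M}. z \<in> Kp \<union> surv u} = {0..1/M}" by auto
    then have "rin K N w s (Suc n) (z @ [a]) = 1" unfolding rin_eq using M1 by simp
    moreover have "C * w z > 1" using True Kp_iff by blast
    ultimately show ?thesis unfolding keep_eq by simp
  next
    case notK: False
    then have zR: "z \<in> R" using z unfolding R_def by blast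
    then obtain i where i: "i < length xs" "xs ! i = z" using setxs by (metis in_set_conv_nth)
    have set_eq: "{u \<in> {0..1/M}. z \<in> Kp \<union> surv u} = {u \<in> {0..1/M}. P i u}"
    proof -
      have "z \<in> surv u \<longleftrightarrow> P i u" for u
      proof
        assume "z \<in> surv u"
        then obtain i' where "i' < length xs" "z = xs ! i'" "P i' u" unfolding surv_mem by auto
        then have "i' = i" using i dist by (metis nth_eq_iff_index_eq)
        then show "P i u" using \<open>P i' u\<close> by simp
      next
        assume "P i u" then show "z \<in> surv u" unfolding surv_mem using i by auto
      qed
      then show ?thesis using notK by auto
    qed
    have CW: "C * w z \<le> 1" using notK z Kp_iff by (meson not_less)
    have wz: "w z > 0" using z by (rule pos)
    have WhZ: "Wh z = C * w z / M" by (rule Wh_val)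
    have qa: "0 \<le> Q i" using Qmono[of 0 i] i Q0 by simp
    have qab: "Q i \<le> Q (Suc i)" using Qmono[of i "Suc i"] i by simp
    have qb: "Q (Suc i) \<le> 1" using Qmono[of "Suc i" "length xs"] i Qlen by simp
    have qd: "Q (Suc i) - Q i = Wh z" using Qstep[of i] i by simp
    have qd2: "Q (Suc i) - Q i \<le> 1 / real mm"
      unfolding qd WhZ mm(1)[symmetric] using CW M1 by (simp add: divide_right_mono)
    have "measure lborel {u \<in> {0..1/M}. P i u} = Q (Suc i) - Q i"
      unfolding P_def mm(1) using strat_measure[OF mm(2) qa qab qb qd2] .
    then have "rin K N w s (Suc n) (z @ [a]) = M * Wh z" using rin_eq set_eq qd by simp
    also have "\<dots> = C * w z" unfolding WhZ using M1 by simp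
    finally show ?thesis unfolding keep_eq using CW by simp
  qed
qed

lemma Wt_prefix:
  "n \<le> length ss \<Longrightarrow> Wt K N nu f g (ss @ ts) n z = Wt K N nu f g ss n z"
proof (induction n arbitrary: z rule: less_induct)
  case (less n)
  show ?case
  proof (cases n)
    case 0 then show ?thesis by simp
  next
    case (Suc m)
    show ?thesis
    proof (cases m)
      case 0 then show ?thesis using Suc by simp
    next
      case (Suc k)
      have IH: "Wt K N nu f g (ss @ ts) (Suc k) = Wt K N nu f g ss (Suc k)"
        using less \<open>n = Suc m\<close> Suc by auto
      have k1: "k < length ss" "Suc k < length ss" using less \<open>n = Suc m\<close> Suc by auto
      show ?thesis using \<open>n = Suc m\<close> Suc IH k1 by (simp add: Let_def nth_append)
    qed
  qed
qed

lemma Wt_prefix':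
  "n \<le> length ss \<Longrightarrow> Wt K N nu f g (ss @ ts) n = Wt K N nu f g ss n"
  by (rule ext) (rule Wt_prefix)

lemma Wt_take: "n \<le> k \<Longrightarrow> Wt K N nu f g ss n z = Wt K N nu f g (take k ss) n z"
proof (cases "k \<le> length ss")
  case True
  assume "n \<le> k"
  then have "n \<le> length (take k ss)" using True by simp
  then show ?thesis using Wt_prefix[where n=n and ss="take k ss" and ts="drop k ss"] by simp
next
  case False then show ?thesis by simp
qed

lemma psi_prefix:
  assumes "1 \<le> n" "n \<le> length ss"
  shows "psi K N nu f g n (ss @ ts) = psi K N nu f g n ss"
proof -
  have "(\<Prod>k\<in>{2..n}. rn K N (Wt K N nu f g (ss @ ts) (k-1)) ((ss @ ts)!(k-2)) ((ss @ ts)!(k-1)))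
      = (\<Prod>k\<in>{2..n}. rn K N (Wt K N nu f g ss (k-1)) (ss!(k-2)) (ss!(k-1)))"
    using assms by (intro prod.cong refl) (auto simp: Wt_prefix' nth_append)
  moreover have "(ss @ ts) ! 0 = ss ! 0" using assms by (cases ss) auto
  ultimately show ?thesis unfolding psi_def by simp
qed

lemma psi_Suc:
  assumes "1 \<le> n"
  shows "psi K N nu f g (Suc n) ss = psi K N nu f g n ss * rn K N (Wt K N nu f g ss n) (ss!(n-1)) (ss!n)"
  using assms unfolding psi_def by (simp add: prod.cl_ivl_Suc mult.assoc)

lemma psi_nonneg: "psi K N nu f g n ss \<ge> 0"
  unfolding psi_def by (auto intro!: prod_nonneg rn_nonneg)

lemma psi_snoc:
  assumes "1 \<le> n" "length ss = n"
  shows "psi K N nu f g (Suc n) (ss @ [s]) = psi K N nu f g n ss * rn K N (Wt K N nu f g ss n) (ss!(n-1)) s"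
proof -
  have "psi K N nu f g (Suc n) (ss @ [s]) = psi K N nu f g n (ss @ [s]) * rn K N (Wt K N nu f g (ss @ [s]) n) ((ss @ [s])!(n-1)) ((ss @ [s])!n)"
    by (rule psi_Suc[OF assms(1)])
  also have "psi K N nu f g n (ss @ [s]) = psi K N nu f g n ss" using assms by (intro psi_prefix) auto
  also have "Wt K N nu f g (ss @ [s]) n = Wt K N nu f g ss n" using assms by (intro ext Wt_prefix) auto
  finally show ?thesis using assms by (simp add: nth_append)
qed

lemma joint_split:
  assumes "1 \<le> n" "n \<le> m"
  shows "joint nu f g m x = joint nu f g n (take n x) * pfut_x f m n x * pfut_y g m n x"
proof -
  define F where "F k = f (take (k - 1) x) (x ! (k - 1)) * g k (take k x)" for k
  have "{2..m} = {2..n} \<union> {Suc n..m}" using assms by auto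
  then have "(\<Prod>k\<in>{2..m}. F k) = (\<Prod>k\<in>{2..n}. F k) * (\<Prod>k\<in>{Suc n..m}. F k)"
    by (simp add: prod.union_disjoint)
  moreover have "(\<Prod>k\<in>{2..n}. F k) = (\<Prod>k\<in>{2..n}. f (take (k - 1) (take n x)) (take n x ! (k - 1)) * g k (take k (take n x)))"
    unfolding F_def by (intro prod.cong refl) (auto simp: min_def)
  moreover have "(\<Prod>k\<in>{Suc n..m}. F k) = pfut_x f m n x * pfut_y g m n x"
    unfolding F_def pfut_x_def pfut_y_def by (simp add: prod.distrib)
  moreover have "take n x ! 0 = x ! 0" "take 1 (take n x) = take 1 x" using assms by (auto simp: min_def)
  ultimately show ?thesis unfolding joint_def F_def by (simp add: mult.assoc)
qed

lemma Wt_step: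
  assumes "1 \<le> n"
  shows "Wt K N nu f g ss (Suc n) z = (if z \<in> ss!n then
     (f (butlast z) (last z) * g (Suc n) z * Wt K N nu f g ss n (butlast z) / keepp N (Wt K N nu f g ss n) (ss!(n-1)) (butlast z))
     / (\<Sum>u\<in>ss!n. f (butlast u) (last u) * g (Suc n) u * Wt K N nu f g ss n (butlast u) / keepp N (Wt K N nu f g ss n) (ss!(n-1)) (butlast u))
     else 0)"
proof (cases n)
  case 0 then show ?thesis using assms by simp
next
  case (Suc m) then show ?thesis by (simp only: Wt.simps Let_def diff_Suc_1)
qed

lemma Supps_snoc: "ss @ [s] \<in> Supps K (Suc n) \<longleftrightarrow> ss \<in> Supps K n \<and> s \<subseteq> paths K (Suc n)"
proof
  assume a: "ss @ [s] \<in> Supps K (Suc n)"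
  then have len: "length ss = n" and all: "\<forall>i<Suc n. (ss @ [s]) ! i \<subseteq> paths K (Suc i)"
    unfolding Supps_def by auto
  have "ss ! i \<subseteq> paths K (Suc i)" if "i < n" for i
    using all[rule_format, of i] that len by (simp add: nth_append)
  moreover have "s \<subseteq> paths K (Suc n)" using all[rule_format, of n] len by (simp add: nth_append)
  ultimately show "ss \<in> Supps K n \<and> s \<subseteq> paths K (Suc n)" using len unfolding Supps_def by auto
next
  assume a: "ss \<in> Supps K n \<and> s \<subseteq> paths K (Suc n)"
  then have len: "length ss = n" and all: "\<forall>i<n. ss ! i \<subseteq> paths K (Suc i)"
    unfolding Supps_def by auto
  have "(ss @ [s]) ! i \<subseteq> paths K (Suc i)" if "i < Suc n" for i
  proof (cases "i < n")
    case True then show ?thesis using all len by (simp add: nth_append)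
  next
    case False then have "i = n" using that by simp
    then show ?thesis using a len by (simp add: nth_append)
  qed
  then show "ss @ [s] \<in> Supps K (Suc n)" using len unfolding Supps_def by auto
qed

lemma Supps_sub: "ss \<in> Supps K n \<Longrightarrow> 1 \<le> k \<Longrightarrow> k \<le> n \<Longrightarrow> ss!(k-1) \<subseteq> paths K k"
proof -
  assume a: "ss \<in> Supps K n" "1 \<le> k" "k \<le> n"
  then have "k - 1 < n" by simp
  then have "ss ! (k - 1) \<subseteq> paths K (Suc (k - 1))" using a(1) unfolding Supps_def by blast
  then show ?thesis using a(2) by simp
qed

lemma Supps_len: "ss \<in> Supps K n \<Longrightarrow> length ss = n"
  unfolding Supps_def by simp

lemma Supps_fin: "ss \<in> Supps K n \<Longrightarrow> 1 \<le> k \<Longrightarrow> k \<le> n \<Longrightarrow> finite (ss!(k-1))"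
  using Supps_sub[of ss K n k] finite_paths[of K k] by (rule finite_subset)

lemma paths_take: "x \<in> paths K m \<Longrightarrow> k \<le> m \<Longrightarrow> take k x \<in> paths K k"
  unfolding paths_def by (auto dest: in_set_takeD)

lemma paths_snoc: "y \<in> paths K n \<Longrightarrow> a \<in> {1..K} \<Longrightarrow> y @ [a] \<in> paths K (Suc n)"
  unfolding paths_def by auto

lemma paths_len: "x \<in> paths K n \<Longrightarrow> length x = n"
  unfolding paths_def by auto

lemma paths_nth: assumes "x \<in> paths K n" "i < n" shows "x ! i \<in> {1..K}"
proof -
  have "length x = n" "set x \<subseteq> {1..K}" using assms(1) unfolding paths_def by auto
  then show ?thesis using assms(2) nth_mem by blast
qed

lemma paths_append: "p \<in> paths K n \<Longrightarrow> r \<in> paths K m \<Longrightarrow> p @ r \<in> paths K (n + m)"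
  unfolding paths_def by auto

lemma paths_split: "x \<in> paths K m \<Longrightarrow> n \<le> m \<Longrightarrow> drop n x \<in> paths K (m - n)"
  unfolding paths_def by (auto dest: in_set_dropD)

lemma keep_pos:
  assumes "N \<ge> 1" "finite s" "\<And>z. z \<in> s \<Longrightarrow> w z > 0" "z \<in> s"
  shows "keepp N w s z > 0"
proof (cases "card s \<le> N")
  case True then show ?thesis by (simp add: keepp_def)
next
  case False
  then have "Cthr N w s > 0" using Cthr_prop[of s N w] assms by auto
  then show ?thesis using False assms(3)[OF assms(4)] by (simp add: keepp_def)
qed

locale dpf =
  fixes K N T :: nat and nu :: "nat \<Rightarrow> real" and f :: "nat list \<Rightarrow> nat \<Rightarrow> real"
    and g :: "nat \<Rightarrow> nat list \<Rightarrow> real"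
  assumes K1: "K \<ge> 1" and T1: "T \<ge> 1" and N2: "N \<ge> 2"
    and nu_nonneg: "\<And>a. a \<in> {1..K} \<Longrightarrow> nu a \<ge> 0"
    and f_nonneg: "\<And>xs n a. xs \<in> paths K n \<Longrightarrow> 1 \<le> n \<Longrightarrow> n < T \<Longrightarrow> a \<in> {1..K} \<Longrightarrow> f xs a \<ge> 0"
    and g_nonneg: "\<And>xs n. xs \<in> paths K n \<Longrightarrow> 1 \<le> n \<Longrightarrow> n \<le> T \<Longrightarrow> g n xs \<ge> 0"
    and support: "\<And>xs n. xs \<in> paths K n \<Longrightarrow> 1 \<le> n \<Longrightarrow> n \<le> T \<Longrightarrow> joint nu f g n xs > 0"
begin

lemma N1: "N \<ge> 1" using N2 by simp

lemma joint_snoc: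
  assumes "y \<in> paths K n" "1 \<le> n"
  shows "joint nu f g (Suc n) (y @ [a]) = joint nu f g n y * (f y a * g (Suc n) (y @ [a]))"
proof -
  have len: "length y = n" using assms paths_len by blast
  have "joint nu f g (Suc n) (y @ [a]) = joint nu f g n (take n (y @ [a])) * pfut_x f (Suc n) n (y @ [a]) * pfut_y g (Suc n) n (y @ [a])"
    using assms by (intro joint_split) auto
  then show ?thesis using len by (simp add: pfut_x_def pfut_y_def nth_append)
qed

lemma fg_pos:
  assumes "y \<in> paths K n" "1 \<le> n" "n < T" "a \<in> {1..K}"
  shows "f y a * g (Suc n) (y @ [a]) > 0"
proof -
  have "joint nu f g (Suc n) (y @ [a]) > 0" using assms by (intro support paths_snoc) auto
  moreover have "joint nu f g n y > 0" using assms by (intro support) auto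
  ultimately show ?thesis unfolding joint_snoc[OF assms(1,2)] by (simp add: zero_less_mult_iff)
qed

lemma nug_pos:
  assumes "u \<in> paths K 1"
  shows "nu (hd u) * g 1 u > 0"
proof -
  obtain a where u: "u = [a]" using assms unfolding paths_def by (auto simp: length_Suc_conv)
  have "joint nu f g 1 u > 0" using assms T1 by (intro support) auto
  then show ?thesis unfolding joint_def u by simp
qed

end

context dpf begin

lemma good:
  assumes "ss \<in> Supps K n" "1 \<le> n" "n \<le> T" "psi K N nu f g n ss \<noteq> 0"
  shows "ss!0 = paths K 1 \<and>
    (\<forall>k. 1 \<le> k \<and> k < n \<longrightarrow> (\<forall>z\<in>ss!k. butlast z \<in> ss!(k-1))) \<and>
    (\<forall>k\<in>{1..n}. \<forall>z\<in>ss!(k-1). Wt K N nu f g ss k z > 0) \<and>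
    (\<exists>c>0. \<forall>z\<in>ss!(n-1). Wt K N nu f g ss n z = c * joint nu f g n z /
        (\<Prod>k\<in>{2..n}. keepp N (Wt K N nu f g ss (k-1)) (ss!(k-2)) (take (k-1) z))) \<and>
    (ss!(n-1) \<noteq> {} \<longrightarrow> (\<Sum>z\<in>ss!(n-1). Wt K N nu f g ss n z) = 1)"
  using assms
proof (induction n arbitrary: ss)
  case 0 then show ?case by simp
next
  case (Suc n)
  show ?case
  proof (cases "n = 0")
    case True
    obtain s where ss: "ss = [s]" using Suc.prems(1) True by (auto simp: Supps_def length_Suc_conv)
    have s: "s = paths K 1" using Suc.prems(4) True ss by (simp add: psi_def split: if_splits)
    define D where "D = (\<Sum>u\<in>paths K 1. nu (hd u) * g 1 u)"
    have ne: "[1] \<in> paths K 1" using K1 by (simp add: paths_def)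
    have Dpos: "D > 0" unfolding D_def
      by (rule sum_pos[OF finite_paths]) (use ne nug_pos in auto)
    have Wv: "Wt K N nu f g ss (Suc 0) z = (if z \<in> paths K 1 then nu (hd z) * g 1 z / D else 0)" for z
      by (simp add: D_def)
    have jv: "joint nu f g (Suc 0) z = nu (hd z) * g (Suc 0) z" if "z \<in> paths K (Suc 0)" for z
    proof -
      have "length z = Suc 0" using paths_len[OF that] by simp
      then obtain a where "z = [a]" by (auto simp: length_Suc_conv)
      then show ?thesis by (simp add: joint_def)
    qed
    have c: "\<forall>z\<in>ss!(Suc n - 1). Wt K N nu f g ss (Suc n) z = (1 / D) * joint nu f g (Suc n) z /
        (\<Prod>k\<in>{2..Suc n}. keepp N (Wt K N nu f g ss (k-1)) (ss!(k-2)) (take (k-1) z))"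
      using True by (simp add: ss s D_def jv)
    have pos: "\<forall>k\<in>{1..Suc n}. \<forall>z\<in>ss!(k-1). Wt K N nu f g ss k z > 0"
      using True Dpos nug_pos by (auto simp: ss s D_def)
    have sum1: "(\<Sum>z\<in>ss!(Suc n - 1). Wt K N nu f g ss (Suc n) z) = 1"
    proof -
      have "(\<Sum>z\<in>ss!(Suc n - 1). Wt K N nu f g ss (Suc n) z) = (\<Sum>z\<in>paths K 1. nu (hd z) * g 1 z / D)"
        using True by (simp add: ss s D_def)
      also have "\<dots> = D / D" unfolding D_def by (rule sum_divide_distrib[symmetric])
      finally show ?thesis using Dpos by simp
    qed
    have D1: "1 / D > 0" using Dpos by simp
    have pD: "\<exists>c>0. \<forall>z\<in>ss!(Suc n-1). Wt K N nu f g ss (Suc n) z = c * joint nu f g (Suc n) z /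
        (\<Prod>k\<in>{2..Suc n}. keepp N (Wt K N nu f g ss (k-1)) (ss!(k-2)) (take (k-1) z))"
      using D1 c by blast
    have pA: "ss!0 = paths K 1" by (simp add: ss s)
    have pB: "\<forall>k. 1 \<le> k \<and> k < Suc n \<longrightarrow> (\<forall>z\<in>ss!k. butlast z \<in> ss!(k-1))" using True by simp
    show ?thesis using pA pB pos pD sum1 by blast
  next
    case False
    then have n1: "1 \<le> n" by simp
    have lenss: "length ss = Suc n" using Suc.prems(1) by (rule Supps_len)
    obtain ss0 s where ss: "ss = ss0 @ [s]" using lenss by (metis length_Suc_conv_rev)
    have len0: "length ss0 = n" using lenss ss by simp
    have ss0S: "ss0 \<in> Supps K n" and sP: "s \<subseteq> paths K (Suc n)" using Suc.prems(1) Supps_snoc unfolding ss by auto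
    have psi_eq: "psi K N nu f g (Suc n) ss = psi K N nu f g n ss0 * rn K N (Wt K N nu f g ss0 n) (ss0!(n-1)) s"
      unfolding ss using n1 len0 by (rule psi_snoc)
    have psi0: "psi K N nu f g n ss0 \<noteq> 0" and rn0: "rn K N (Wt K N nu f g ss0 n) (ss0!(n-1)) s \<noteq> 0"
      using Suc.prems(4) psi_eq by auto
    have IH: "ss0!0 = paths K 1 \<and>
      (\<forall>k. 1 \<le> k \<and> k < n \<longrightarrow> (\<forall>z\<in>ss0!k. butlast z \<in> ss0!(k-1))) \<and>
      (\<forall>k\<in>{1..n}. \<forall>z\<in>ss0!(k-1). Wt K N nu f g ss0 k z > 0) \<and>
      (\<exists>c>0. \<forall>z\<in>ss0!(n-1). Wt K N nu f g ss0 n z = c * joint nu f g n z /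
        (\<Prod>k\<in>{2..n}. keepp N (Wt K N nu f g ss0 (k-1)) (ss0!(k-2)) (take (k-1) z))) \<and>
      (ss0!(n-1) \<noteq> {} \<longrightarrow> (\<Sum>z\<in>ss0!(n-1). Wt K N nu f g ss0 n z) = 1)"
      using Suc.IH[OF ss0S n1 _ psi0] Suc.prems(3) by simp
    have a0: "ss0!0 = paths K 1" using IH by blast
    have b0: "\<And>k z. 1 \<le> k \<Longrightarrow> k < n \<Longrightarrow> z \<in> ss0!k \<Longrightarrow> butlast z \<in> ss0!(k-1)" using IH by blast
    have c0: "\<And>k z. k \<in> {1..n} \<Longrightarrow> z \<in> ss0!(k-1) \<Longrightarrow> Wt K N nu f g ss0 k z > 0" using IH by blast
    obtain c where cpos: "c > 0" and d0: "\<And>z. z \<in> ss0!(n-1) \<Longrightarrow> Wt K N nu f g ss0 n z = c * joint nu f g n z /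
        (\<Prod>k\<in>{2..n}. keepp N (Wt K N nu f g ss0 (k-1)) (ss0!(k-2)) (take (k-1) z))" using IH by blast
    define w0 where "w0 = Wt K N nu f g ss0 n"
    define s0 where "s0 = ss0!(n-1)"
    have fins0: "finite s0" unfolding s0_def using ss0S n1 by (rule Supps_fin) simp
    have s0P: "s0 \<subseteq> paths K n" unfolding s0_def using ss0S n1 by (rule Supps_sub) simp
    have w0pos: "\<And>y. y \<in> s0 \<Longrightarrow> w0 y > 0" unfolding w0_def s0_def using c0 n1 by auto
    obtain A where AS: "A \<subseteq> s0" and sA: "s = ext K A"
      using rn_pos_ext[OF fins0 rn0[folded s0_def]] by blast
    have kpos: "\<And>y. y \<in> s0 \<Longrightarrow> keepp N w0 s0 y > 0"
      using keep_pos[OF N1 fins0] w0pos by blast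
    define wb where "wb = (\<lambda>u. f (butlast u) (last u) * g (Suc n) u * w0 (butlast u) / keepp N w0 s0 (butlast u))"
    define D where "D = (\<Sum>u\<in>s. wb u)"
    have Wpre: "k \<le> n \<Longrightarrow> Wt K N nu f g ss k = Wt K N nu f g ss0 k" for k
      unfolding ss using len0 by (intro Wt_prefix') simp
    have nth_pre: "k < n \<Longrightarrow> ss!k = ss0!k" for k unfolding ss using len0 by (simp add: nth_append)
    have nth_n: "ss!n = s" unfolding ss using len0 by (simp add: nth_append)
    have Wss: "Wt K N nu f g ss (Suc n) z = (if z \<in> s then wb z / D else 0)" for z
    proof -
      have "ss!(n-1) = s0" unfolding s0_def using n1 by (intro nth_pre) simp
      moreover have "Wt K N nu f g ss n = w0" unfolding w0_def by (rule Wpre) simp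
      ultimately show ?thesis by (simp only: Wt_step[OF n1] nth_n wb_def D_def)
    qed
    have zs: "butlast z \<in> s0 \<and> last z \<in> {1..K} \<and> z = butlast z @ [last z]" if "z \<in> s" for z
      using ext_memD[of z K A] that AS unfolding sA by blast
    have wbpos: "wb z > 0" if "z \<in> s" for z
    proof -
      have z: "butlast z \<in> s0" "last z \<in> {1..K}" "z = butlast z @ [last z]" using zs[OF that] by auto
      have "f (butlast z) (last z) * g (Suc n) (butlast z @ [last z]) > 0"
        using z s0P Suc.prems(3) n1 by (intro fg_pos) auto
      then have "f (butlast z) (last z) * g (Suc n) z > 0" using z(3) by simp
      then show ?thesis unfolding wb_def using w0pos[OF z(1)] kpos[OF z(1)] by simp
    qed
    have Dpos: "D > 0" if "s \<noteq> {}"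
      unfolding D_def using that finite_subset[OF sP finite_paths] wbpos by (intro sum_pos) auto
    have partA: "ss!0 = paths K 1" using a0 n1 len0 unfolding ss by (cases ss0) auto
    have partB: "\<forall>k. 1 \<le> k \<and> k < Suc n \<longrightarrow> (\<forall>z\<in>ss!k. butlast z \<in> ss!(k-1))"
    proof (intro allI impI ballI)
      fix k z assume k: "1 \<le> k \<and> k < Suc n" and z: "z \<in> ss!k"
      show "butlast z \<in> ss!(k-1)"
      proof (cases "k < n")
        case True
        then show ?thesis using b0[of k z] k z nth_pre[of k] nth_pre[of "k-1"] by simp
      next
        case False
        then have "k = n" using k by simp
        then show ?thesis using z zs nth_n nth_pre[of "n-1"] n1 unfolding s0_def by simp
      qed
    qed
    have partC: "\<forall>k\<in>{1..Suc n}. \<forall>z\<in>ss!(k-1). Wt K N nu f g ss k z > 0"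
    proof (intro ballI)
      fix k z assume k: "k \<in> {1..Suc n}" and z: "z \<in> ss!(k-1)"
      show "Wt K N nu f g ss k z > 0"
      proof (cases "k \<le> n")
        case True
        then show ?thesis using c0[of k z] k z nth_pre[of "k-1"] Wpre[of k] by simp
      next
        case False
        then have kk: "k = Suc n" using k by simp
        then have zs': "z \<in> s" using z nth_n by simp
        then have "D > 0" using Dpos by blast
        then show ?thesis unfolding kk Wss using wbpos[OF zs'] zs' by simp
      qed
    qed
    have partE: "ss!(Suc n - 1) \<noteq> {} \<longrightarrow> (\<Sum>z\<in>ss!(Suc n - 1). Wt K N nu f g ss (Suc n) z) = 1"
    proof
      assume "ss!(Suc n - 1) \<noteq> {}"
      then have sne: "s \<noteq> {}" using nth_n by simp
      have "(\<Sum>z\<in>ss!(Suc n - 1). Wt K N nu f g ss (Suc n) z) = (\<Sum>z\<in>s. wb z / D)"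
        using nth_n by (simp add: Wss)
      also have "\<dots> = D / D" unfolding D_def by (rule sum_divide_distrib[symmetric])
      finally show "(\<Sum>z\<in>ss!(Suc n - 1). Wt K N nu f g ss (Suc n) z) = 1" using Dpos[OF sne] by simp
    qed
    have partD: "\<exists>c>0. \<forall>z\<in>ss!(Suc n-1). Wt K N nu f g ss (Suc n) z = c * joint nu f g (Suc n) z /
        (\<Prod>k\<in>{2..Suc n}. keepp N (Wt K N nu f g ss (k-1)) (ss!(k-2)) (take (k-1) z))"
    proof (cases "s = {}")
      case True
      then show ?thesis using nth_n by (intro exI[of _ 1]) simp
    next
      case sne: False
      show ?thesis
      proof (intro exI[of _ "c / D"] conjI ballI)
        show "c / D > 0" using cpos Dpos[OF sne] by simp
        fix z assume "z \<in> ss!(Suc n - 1)"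
        then have zs': "z \<in> s" using nth_n by simp
        define y where "y = butlast z"
        define a where "a = last z"
        have y: "y \<in> s0" "a \<in> {1..K}" "z = y @ [a]" using zs[OF zs'] unfolding y_def a_def by auto
        have yP: "y \<in> paths K n" using y s0P by auto
        have leny: "length y = n" using yP by (rule paths_len)
        define P0 where "P0 = (\<Prod>k\<in>{2..n}. keepp N (Wt K N nu f g ss0 (k-1)) (ss0!(k-2)) (take (k-1) y))"
        have w0y: "w0 y = c * joint nu f g n y / P0" unfolding w0_def P0_def using d0 y(1) unfolding s0_def by blast
        have P0ne: "P0 \<noteq> 0" using w0y w0pos[OF y(1)] by auto
        have kne: "keepp N w0 s0 y \<noteq> 0" using kpos[OF y(1)] by simp
        have Dne: "D \<noteq> 0" using Dpos[OF sne] by simp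
        have prodeq: "(\<Prod>k\<in>{2..Suc n}. keepp N (Wt K N nu f g ss (k-1)) (ss!(k-2)) (take (k-1) z)) = P0 * keepp N w0 s0 y"
        proof -
          have "(\<Prod>k\<in>{2..Suc n}. keepp N (Wt K N nu f g ss (k-1)) (ss!(k-2)) (take (k-1) z))
             = (\<Prod>k\<in>{2..n}. keepp N (Wt K N nu f g ss (k-1)) (ss!(k-2)) (take (k-1) z)) * keepp N (Wt K N nu f g ss n) (ss!(n-1)) (take n z)"
            using n1 by (simp add: prod.cl_ivl_Suc)
          also have "(\<Prod>k\<in>{2..n}. keepp N (Wt K N nu f g ss (k-1)) (ss!(k-2)) (take (k-1) z)) = P0"
            unfolding P0_def using leny y(3) by (intro prod.cong refl) (auto simp: Wpre nth_pre)
          also have "keepp N (Wt K N nu f g ss n) (ss!(n-1)) (take n z) = keepp N w0 s0 y"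
            using leny y(3) n1 unfolding w0_def s0_def by (simp add: Wpre nth_pre)
          finally show ?thesis .
        qed
        have jz: "joint nu f g (Suc n) z = joint nu f g n y * (f y a * g (Suc n) z)"
          unfolding y(3) by (rule joint_snoc[OF yP n1])
        have "Wt K N nu f g ss (Suc n) z = wb z / D" using zs' by (simp add: Wss)
        also have "\<dots> = (f y a * g (Suc n) z * (c * joint nu f g n y / P0) / keepp N w0 s0 y) / D"
          unfolding wb_def y_def[symmetric] a_def[symmetric] w0y ..
        also have "\<dots> = c / D * joint nu f g (Suc n) z / (P0 * keepp N w0 s0 y)"
          unfolding jz using P0ne kne Dne by (simp add: field_simps)
        finally show "Wt K N nu f g ss (Suc n) z = c / D * joint nu f g (Suc n) z /
          (\<Prod>k\<in>{2..Suc n}. keepp N (Wt K N nu f g ss (k-1)) (ss!(k-2)) (take (k-1) z))"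
          unfolding prodeq .
      qed
    qed
    show ?thesis using partA partB partC partD partE by blast
  qed
qed

end

definition Qf :: "nat \<Rightarrow> nat \<Rightarrow> (nat \<Rightarrow> real) \<Rightarrow> (nat list \<Rightarrow> nat \<Rightarrow> real) \<Rightarrow> (nat \<Rightarrow> nat list \<Rightarrow> real)
   \<Rightarrow> nat \<Rightarrow> nat \<Rightarrow> nat list \<Rightarrow> nat list set list \<Rightarrow> real" where
  "Qf K N nu f g T n x ss =
     post K nu f g T x *
     (\<Prod>k\<in>{2..n}. if take k x \<in> ss!(k-1) then 1 else 0) *
     psi K N nu f g n ss /
     (\<Prod>k\<in>{2..n}. rin K N (Wt K N nu f g ss (k-1)) (ss!(k-2)) k (take k x))"

lemma piN_Qf: "piN K N nu f g T x ss = Qf K N nu f g T T x ss"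
  unfolding piN_def Qf_def ..

lemma Qf_psi0: "psi K N nu f g n ss = 0 \<Longrightarrow> Qf K N nu f g T n x ss = 0"
  unfolding Qf_def by simp

lemma alg1: fixes a I i p r R q :: real
  shows "a * (I * i) * (p * r) / (R * q) = a * I * p / R * (i * r / q)"
  by (simp add: divide_inverse inverse_mult_distrib mult_ac)

lemma Qf_snoc:
  assumes "1 \<le> n" "length ss = n"
  shows "Qf K N nu f g T (Suc n) x (ss @ [s]) = Qf K N nu f g T n x ss *
    ((if take (Suc n) x \<in> s then 1 else 0) * rn K N (Wt K N nu f g ss n) (ss!(n-1)) s /
      rin K N (Wt K N nu f g ss n) (ss!(n-1)) (Suc n) (take (Suc n) x))"
proof -
  have Wpre: "k \<le> n \<Longrightarrow> Wt K N nu f g (ss @ [s]) k = Wt K N nu f g ss k" for k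
    using assms by (intro Wt_prefix') simp
  have npre: "k < n \<Longrightarrow> (ss @ [s])!k = ss!k" for k using assms by (simp add: nth_append)
  have nn: "(ss @ [s])!n = s" using assms by (simp add: nth_append)
  have I: "(\<Prod>k\<in>{2..Suc n}. if take k x \<in> (ss @ [s])!(k-1) then 1 else 0)
     = (\<Prod>k\<in>{2..n}. if take k x \<in> ss!(k-1) then (1::real) else 0) * (if take (Suc n) x \<in> s then 1 else 0)"
  proof -
    have "(\<Prod>k\<in>{2..n}. if take k x \<in> (ss @ [s])!(k-1) then (1::real) else 0) = (\<Prod>k\<in>{2..n}. if take k x \<in> ss!(k-1) then 1 else 0)"
      by (intro prod.cong refl) (auto simp: npre)
    then show ?thesis using assms by (simp add: prod.cl_ivl_Suc nn)
  qed
  have R: "(\<Prod>k\<in>{2..Suc n}. rin K N (Wt K N nu f g (ss @ [s]) (k-1)) ((ss @ [s])!(k-2)) k (take k x))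
     = (\<Prod>k\<in>{2..n}. rin K N (Wt K N nu f g ss (k-1)) (ss!(k-2)) k (take k x)) *
       rin K N (Wt K N nu f g ss n) (ss!(n-1)) (Suc n) (take (Suc n) x)"
  proof -
    have "(\<Prod>k\<in>{2..n}. rin K N (Wt K N nu f g (ss @ [s]) (k-1)) ((ss @ [s])!(k-2)) k (take k x))
      = (\<Prod>k\<in>{2..n}. rin K N (Wt K N nu f g ss (k-1)) (ss!(k-2)) k (take k x))"
      by (intro prod.cong refl) (auto simp: npre Wpre)
    moreover have "Wt K N nu f g (ss @ [s]) n = Wt K N nu f g ss n" by (rule Wpre) simp
    moreover have "(ss @ [s])!(n-1) = ss!(n-1)" using assms by (intro npre) simp
    ultimately show ?thesis using assms by (simp add: prod.cl_ivl_Suc)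
  qed
  have P: "psi K N nu f g (Suc n) (ss @ [s]) = psi K N nu f g n ss * rn K N (Wt K N nu f g ss n) (ss!(n-1)) s"
    using assms by (rule psi_snoc)
  show ?thesis unfolding Qf_def I R P by (rule alg1)
qed

lemma rin_sum:
  "rin K N w s n z = (\<Sum>s'\<in>Pow (paths K n). if z \<in> s' then rn K N w s s' else 0)"
proof -
  have "{s'. s' \<subseteq> paths K n \<and> z \<in> s'} = {s'\<in>Pow (paths K n). z \<in> s'}" by auto
  moreover have "(\<Sum>s'\<in>{s'\<in>Pow (paths K n). z \<in> s'}. rn K N w s s') = (\<Sum>s'\<in>Pow (paths K n). if z \<in> s' then rn K N w s s' else 0)"
    by (rule sum.inter_filter) (simp add: finite_paths)
  ultimately show ?thesis unfolding rin_def by simp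
qed

context dpf begin

lemma take_closed:
  assumes ss: "ss \<in> Supps K n" "1 \<le> n" "n \<le> T" "psi K N nu f g n ss \<noteq> 0"
    and p: "p \<in> ss!(n-1)" and k: "1 \<le> k" "k \<le> n"
  shows "take k p \<in> ss!(k-1)"
proof -
  have b: "\<And>k z. 1 \<le> k \<Longrightarrow> k < n \<Longrightarrow> z \<in> ss!k \<Longrightarrow> butlast z \<in> ss!(k-1)"
    using good[OF ss] by blast
  have pl: "length p = n" using Supps_sub[OF ss(1) ss(2) le_refl] p paths_len by blast
  have "\<forall>j. j \<le> n - k \<longrightarrow> take (n - j) p \<in> ss!(n - j - 1)"
  proof (intro allI impI)
    fix j show "j \<le> n - k \<Longrightarrow> take (n - j) p \<in> ss!(n - j - 1)"
    proof (induction j)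
      case 0 then show ?case using p pl by simp
    next
      case (Suc j)
      then have IH: "take (n - j) p \<in> ss!(n - j - 1)" by simp
      have j1: "1 \<le> n - j - 1" "n - j - 1 < n" using Suc.prems k by auto
      have "butlast (take (n - j) p) \<in> ss!(n - j - 1 - 1)" using b[OF j1 IH] .
      moreover have "butlast (take (n - j) p) = take (n - Suc j) p" using pl Suc.prems k
        by (simp add: butlast_take)
      ultimately show ?case by (simp add: diff_Suc)
    qed
  qed
  then have "take (n - (n - k)) p \<in> ss!(n - (n - k) - 1)" by blast
  then show ?thesis using k by simp
qed

lemma marg:
  assumes ss: "ss \<in> Supps K n" and n: "1 \<le> n" "n < T" and x: "x \<in> paths K T"
  shows "(\<Sum>s\<in>Pow (paths K (Suc n)). Qf K N nu f g T (Suc n) x (ss @ [s])) = Qf K N nu f g T n x ss"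
proof -
  have len: "length ss = n" using ss by (rule Supps_len)
  define q where "q = rin K N (Wt K N nu f g ss n) (ss!(n-1)) (Suc n) (take (Suc n) x)"
  define h where "h s = (if take (Suc n) x \<in> s then rn K N (Wt K N nu f g ss n) (ss!(n-1)) s else 0)" for s
  have each: "Qf K N nu f g T (Suc n) x (ss @ [s]) = Qf K N nu f g T n x ss * (h s / q)" for s
    unfolding Qf_snoc[OF n(1) len] h_def q_def by simp
  have "(\<Sum>s\<in>Pow (paths K (Suc n)). Qf K N nu f g T (Suc n) x (ss @ [s]))
     = (\<Sum>s\<in>Pow (paths K (Suc n)). Qf K N nu f g T n x ss * (h s / q))"
    unfolding each ..
  also have "\<dots> = Qf K N nu f g T n x ss * ((\<Sum>s\<in>Pow (paths K (Suc n)). h s) / q)"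
    unfolding sum_divide_distrib sum_distrib_left ..
  also have "(\<Sum>s\<in>Pow (paths K (Suc n)). h s) = q"
    unfolding q_def h_def by (rule rin_sum[symmetric])
  finally have eq: "(\<Sum>s\<in>Pow (paths K (Suc n)). Qf K N nu f g T (Suc n) x (ss @ [s])) = Qf K N nu f g T n x ss * (q / q)" .
  show ?thesis
  proof (cases "q = 0")
    case False then show ?thesis using eq by simp
  next
    case True
    have "Qf K N nu f g T n x ss = 0"
    proof (rule ccontr)
      assume Qne: "Qf K N nu f g T n x ss \<noteq> 0"
      then have psi: "psi K N nu f g n ss \<noteq> 0" using Qf_psi0 by blast
      have G: "ss!0 = paths K 1"
        "\<And>k z. k \<in> {1..n} \<Longrightarrow> z \<in> ss!(k-1) \<Longrightarrow> Wt K N nu f g ss k z > 0"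
        using good[OF ss n(1) _ psi] n by auto
      have xn: "take n x \<in> ss!(n-1)"
      proof (cases "n = 1")
        case True then show ?thesis using G(1) paths_take[OF x] n by simp
      next
        case False
        then have "n \<in> {2..n}" using n by simp
        moreover have "(\<Prod>k\<in>{2..n}. if take k x \<in> ss!(k-1) then (1::real) else 0) \<noteq> 0"
          using Qne unfolding Qf_def by auto
        ultimately have "\<forall>a\<in>{2..n}. (if take a x \<in> ss!(a-1) then (1::real) else 0) \<noteq> 0"
          using prod_zero_iff[of "{2..n}" "\<lambda>k. if take k x \<in> ss!(k-1) then (1::real) else 0"] by auto
        then have "(if take n x \<in> ss!(n-1) then (1::real) else 0) \<noteq> 0" using \<open>n \<in> {2..n}\<close> by blast
        then show ?thesis by (simp split: if_splits)
      qed
      have fin: "finite (ss!(n-1))" using ss n(1) le_refl by (rule Supps_fin)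
      have sub: "ss!(n-1) \<subseteq> paths K n" using ss n(1) le_refl by (rule Supps_sub)
      have xa: "x ! n \<in> {1..K}" using x n by (intro paths_nth) auto
      have tk: "take (Suc n) x = take n x @ [x ! n]" using x n paths_len[OF x] by (simp add: take_Suc_conv_app_nth)
      have "q = keepp N (Wt K N nu f g ss n) (ss!(n-1)) (take n x)"
        unfolding q_def tk using G(2) n(1) by (intro rin_keep[OF K1 N1 fin sub _ xn xa]) auto
      moreover have "keepp N (Wt K N nu f g ss n) (ss!(n-1)) (take n x) > 0"
        using G(2) n(1) by (intro keep_pos[OF N1 fin _ xn]) auto
      ultimately show False using True by simp
    qed
    then show ?thesis using eq by simp
  qed
qed

end

context dpf begin

lemma pfut_nonneg:
  assumes x: "x \<in> paths K T" and n: "1 \<le> n"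
  shows "pfut_x f T n x \<ge> 0" "pfut_y g T n x \<ge> 0"
proof -
  show "pfut_x f T n x \<ge> 0" unfolding pfut_x_def
  proof (rule prod_nonneg, rule f_nonneg)
    fix k assume k: "k \<in> {n+1..T}"
    show "take (k - 1) x \<in> paths K (k - 1)" using x k by (intro paths_take) auto
    show "1 \<le> k - 1" "k - 1 < T" using k n by auto
    show "x ! (k - 1) \<in> {1..K}" using x k by (intro paths_nth) auto
  qed
  show "pfut_y g T n x \<ge> 0" unfolding pfut_y_def
  proof (rule prod_nonneg, rule g_nonneg)
    fix k assume k: "k \<in> {n+1..T}"
    show "take k x \<in> paths K k" using x k by (intro paths_take) auto
    show "1 \<le> k" "k \<le> T" using k n by auto
  qed
qed

lemma Zp_pos: "(\<Sum>u\<in>paths K T. joint nu f g T u) > 0"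
proof (rule sum_pos[OF finite_paths])
  have "replicate T 1 \<in> paths K T" using K1 T1 by (simp add: paths_def)
  then show "paths K T \<noteq> {}" by blast
  fix u assume "u \<in> paths K T" then show "joint nu f g T u > 0" using T1 by (intro support) auto
qed

lemma KF:
  assumes ss: "ss \<in> Supps K n" and n: "1 \<le> n" "n \<le> T"
  shows "\<exists>\<mu>. (\<forall>p\<in>paths K n. \<forall>r\<in>paths K (T-n).
            Qf K N nu f g T n (p @ r) ss = \<mu> * (if p \<in> ss!(n-1) then Vb K N nu f g T ss n r p else 0)) \<and>
          (\<mu> \<noteq> 0 \<longrightarrow> (\<forall>q\<in>ss!(n-1). \<forall>r\<in>paths K (T-n). Vb K N nu f g T ss n r q \<ge> 0))"
proof (cases "psi K N nu f g n ss = 0")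
  case True
  then show ?thesis by (intro exI[of _ 0]) (simp add: Qf_psi0)
next
  case False
  note G = good[OF ss n False]
  have a: "ss!0 = paths K 1" using G by blast
  have c: "\<And>k z. k \<in> {1..n} \<Longrightarrow> z \<in> ss!(k-1) \<Longrightarrow> Wt K N nu f g ss k z > 0" using G by blast
  obtain c where cpos: "c > 0" and d: "\<And>z. z \<in> ss!(n-1) \<Longrightarrow> Wt K N nu f g ss n z = c * joint nu f g n z /
        (\<Prod>k\<in>{2..n}. keepp N (Wt K N nu f g ss (k-1)) (ss!(k-2)) (take (k-1) z))" using G by blast
  define Zp where "Zp = (\<Sum>u\<in>paths K T. joint nu f g T u)"
  have Zp: "Zp > 0" unfolding Zp_def by (rule Zp_pos)
  define \<mu> where "\<mu> = psi K N nu f g n ss / (c * Zp)"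
  show ?thesis
  proof (intro exI[of _ \<mu>] conjI ballI impI)
    fix q r assume q: "q \<in> ss!(n-1)" and r: "r \<in> paths K (T-n)"
    have qP: "q \<in> paths K n" using Supps_sub[OF ss n(1) le_refl] q by blast
    have qr: "q @ r \<in> paths K T" using paths_append[OF qP r] n by simp
    show "Vb K N nu f g T ss n r q \<ge> 0" unfolding Vb_def
      using c[of n q] q n pfut_nonneg[OF qr n(1)] by (simp add: less_imp_le)
  next
    fix p r assume p: "p \<in> paths K n" and r: "r \<in> paths K (T-n)"
    define x where "x = p @ r"
    have lenp: "length p = n" using p by (rule paths_len)
    have xP: "x \<in> paths K T" unfolding x_def using paths_append[OF p r] n by simp
    have tk: "k \<le> n \<Longrightarrow> take k x = take k p" for k unfolding x_def using lenp by simp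
    show "Qf K N nu f g T n x ss = \<mu> * (if p \<in> ss!(n-1) then Vb K N nu f g T ss n r p else 0)"
    proof (cases "p \<in> ss!(n-1)")
      case False
      have n2: "n \<ge> 2" using False a p n by (cases "n = 1") auto
      have "(\<Prod>k\<in>{2..n}. if take k x \<in> ss!(k-1) then (1::real) else 0) = 0"
        using n2 False tk[of n] lenp by (intro prod_zero) auto
      then show ?thesis using False unfolding Qf_def by simp
    next
      case True
      have ind: "(\<Prod>k\<in>{2..n}. if take k x \<in> ss!(k-1) then (1::real) else 0) = 1"
      proof (rule prod.neutral, rule ballI)
        fix k assume k: "k \<in> {2..n}"
        have "take k p \<in> ss!(k-1)" using take_closed[OF ss n False True] k by auto
        then show "(if take k x \<in> ss!(k-1) then (1::real) else 0) = 1" using tk[of k] k by simp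
      qed
      define Pk where "Pk = (\<Prod>k\<in>{2..n}. keepp N (Wt K N nu f g ss (k-1)) (ss!(k-2)) (take (k-1) p))"
      have rinP: "(\<Prod>k\<in>{2..n}. rin K N (Wt K N nu f g ss (k-1)) (ss!(k-2)) k (take k x)) = Pk"
        unfolding Pk_def
      proof (rule prod.cong[OF refl])
        fix k assume k: "k \<in> {2..n}"
        define j where "j = k - 1"
        have kj: "k = Suc j" "j \<ge> 1" "j \<le> n" using k unfolding j_def by auto
        have jj: "k - 2 = j - 1" using kj by simp
        have fin: "finite (ss!(j-1))" using Supps_fin[OF ss kj(2)] kj by simp
        have sub: "ss!(j-1) \<subseteq> paths K j" using Supps_sub[OF ss kj(2)] kj by simp
        have pos: "\<And>z. z \<in> ss!(j-1) \<Longrightarrow> Wt K N nu f g ss j z > 0" using c kj by auto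
        have zin: "take j p \<in> ss!(j-1)" using take_closed[OF ss n False True kj(2,3)] .
        have aK: "p ! j \<in> {1..K}" using p kj k by (intro paths_nth) auto
        have tk2: "take k x = take j p @ [p ! j]" using tk[of k] kj k lenp by (simp add: take_Suc_conv_app_nth)
        have "rin K N (Wt K N nu f g ss j) (ss!(j-1)) (Suc j) (take j p @ [p ! j]) = keepp N (Wt K N nu f g ss j) (ss!(j-1)) (take j p)"
          by (rule rin_keep[OF K1 N1 fin sub pos zin aK])
        then show "rin K N (Wt K N nu f g ss (k-1)) (ss!(k-2)) k (take k x) = keepp N (Wt K N nu f g ss (k-1)) (ss!(k-2)) (take (k-1) p)"
          using tk2 kj jj unfolding j_def by simp
      qed
      have Wp: "Wt K N nu f g ss n p = c * joint nu f g n p / Pk" unfolding Pk_def using d[OF True] .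
      have Wpos: "Wt K N nu f g ss n p > 0" using c[of n p] True n by simp
      have Pkne: "Pk \<noteq> 0" using Wp Wpos by auto
      have jx: "joint nu f g T x = joint nu f g n p * pfut_x f T n x * pfut_y g T n x"
        using joint_split[OF n(1) n(2), where x=x and nu=nu and f=f and g=g] tk[of n] lenp by simp
      have "Qf K N nu f g T n x ss = joint nu f g T x / Zp * psi K N nu f g n ss / Pk"
        unfolding Qf_def ind rinP post_def Zp_def by simp
      also have "\<dots> = \<mu> * (Wt K N nu f g ss n p * pfut_x f T n x * pfut_y g T n x)"
        unfolding jx Wp \<mu>_def using cpos Zp Pkne by (simp add: field_simps)
      finally show ?thesis using True unfolding Vb_def x_def by simp
    qed
  qed
qed

end

lemma finite_Supps: "finite (Supps K n)"
proof -
  have "Supps K n \<subseteq> {xs. set xs \<subseteq> Pow (\<Union>i\<le>n. paths K i) \<and> length xs = n}"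
  proof
    fix ss assume ss: "ss \<in> Supps K n"
    have "set ss \<subseteq> Pow (\<Union>i\<le>n. paths K i)"
    proof
      fix s assume "s \<in> set ss"
      then obtain i where i: "i < length ss" "s = ss ! i" by (metis in_set_conv_nth)
      then have "s \<subseteq> paths K (Suc i)" "Suc i \<le> n" using ss unfolding Supps_def by auto
      then show "s \<in> Pow (\<Union>i\<le>n. paths K i)" by blast
    qed
    then show "ss \<in> {xs. set xs \<subseteq> Pow (\<Union>i\<le>n. paths K i) \<and> length xs = n}" using ss Supps_len by blast
  qed
  moreover have "finite {xs. set xs \<subseteq> Pow (\<Union>i\<le>n. paths K i) \<and> length xs = n}"
    by (rule finite_lists_length_eq) (simp add: finite_paths)
  ultimately show ?thesis by (rule finite_subset)
qed

definition Ext :: "nat \<Rightarrow> nat \<Rightarrow> nat \<Rightarrow> nat list set list \<Rightarrow> nat list set list set" where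
  "Ext K T n ss0 = {ss \<in> Supps K T. take n ss = ss0}"

lemma take_Supps: "ss \<in> Supps K T \<Longrightarrow> m \<le> T \<Longrightarrow> take m ss \<in> Supps K m"
  unfolding Supps_def by auto

lemma sum_Supps_Ext:
  assumes "m \<le> T"
  shows "(\<Sum>ss\<in>Supps K T. F ss) = (\<Sum>ss0\<in>Supps K m. \<Sum>ss\<in>Ext K T m ss0. F ss)"
  unfolding Ext_def
  by (rule sum.group[symmetric, OF finite_Supps finite_Supps]) (use assms take_Supps in blast)

lemma Ext_T: "ss0 \<in> Supps K T \<Longrightarrow> Ext K T T ss0 = {ss0}"
  unfolding Ext_def using Supps_len by fastforce

lemma sum_Ext_split:
  assumes ss0: "ss0 \<in> Supps K n" and n: "n < T"
  shows "(\<Sum>ss\<in>Ext K T n ss0. F ss) = (\<Sum>s\<in>Pow (paths K (Suc n)). \<Sum>ss\<in>Ext K T (Suc n) (ss0 @ [s]). F ss)"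
proof -
  have len0: "length ss0 = n" using ss0 by (rule Supps_len)
  have eq: "Ext K T n ss0 = (\<Union>s\<in>Pow (paths K (Suc n)). Ext K T (Suc n) (ss0 @ [s]))"
  proof (intro equalityI subsetI)
    fix ss assume ss: "ss \<in> Ext K T n ss0"
    then have sS: "ss \<in> Supps K T" and tk: "take n ss = ss0" unfolding Ext_def by auto
    have lss: "length ss = T" using sS by (rule Supps_len)
    have "ss ! n \<subseteq> paths K (Suc n)" using sS n unfolding Supps_def by auto
    moreover have "take (Suc n) ss = ss0 @ [ss ! n]" using tk lss n by (simp add: take_Suc_conv_app_nth)
    ultimately show "ss \<in> (\<Union>s\<in>Pow (paths K (Suc n)). Ext K T (Suc n) (ss0 @ [s]))"
      using sS unfolding Ext_def by blast
  next
    fix ss assume "ss \<in> (\<Union>s\<in>Pow (paths K (Suc n)). Ext K T (Suc n) (ss0 @ [s]))"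
    then obtain s where A: "ss \<in> Supps K T" and tk: "take (Suc n) ss = ss0 @ [s]" unfolding Ext_def by auto
    moreover have "take n ss = ss0"
    proof -
      have "take n ss = take n (take (Suc n) ss)" by simp
      also have "\<dots> = take n (ss0 @ [s])" using tk by simp
      also have "\<dots> = ss0" using len0 by simp
      finally show ?thesis .
    qed
    then show "ss \<in> Ext K T n ss0" using A unfolding Ext_def by blast
  qed
  have fin: "finite (Ext K T k ss)" for k ss unfolding Ext_def using finite_Supps by simp
  show ?thesis unfolding eq
  proof (rule sum.UNION_disjoint)
    show "finite (Pow (paths K (Suc n)))" by (simp add: finite_paths)
    show "\<forall>i\<in>Pow (paths K (Suc n)). finite (Ext K T (Suc n) (ss0 @ [i]))" using fin by blast
    show "\<forall>i\<in>Pow (paths K (Suc n)). \<forall>j\<in>Pow (paths K (Suc n)). i \<noteq> j \<longrightarrow>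
        Ext K T (Suc n) (ss0 @ [i]) \<inter> Ext K T (Suc n) (ss0 @ [j]) = {}"
      unfolding Ext_def by auto
  qed
qed

context dpf begin

lemma sum_Supps_Suc:
  "(\<Sum>ss\<in>Supps K (Suc n). F ss) = (\<Sum>ss0\<in>Supps K n. \<Sum>s\<in>Pow (paths K (Suc n)). F (ss0 @ [s]))"
proof -
  have img: "Supps K (Suc n) = (\<lambda>(ss0, s). ss0 @ [s]) ` (Supps K n \<times> Pow (paths K (Suc n)))"
  proof (intro equalityI subsetI)
    fix ss assume ss: "ss \<in> Supps K (Suc n)"
    then have "length ss = Suc n" by (rule Supps_len)
    then obtain ss0 s where e: "ss = ss0 @ [s]" by (metis length_Suc_conv_rev)
    then have "ss0 \<in> Supps K n" "s \<subseteq> paths K (Suc n)" using ss Supps_snoc by auto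
    then show "ss \<in> (\<lambda>(ss0, s). ss0 @ [s]) ` (Supps K n \<times> Pow (paths K (Suc n)))" using e by auto
  next
    fix ss assume "ss \<in> (\<lambda>(ss0, s). ss0 @ [s]) ` (Supps K n \<times> Pow (paths K (Suc n)))"
    then show "ss \<in> Supps K (Suc n)" using Supps_snoc by auto
  qed
  have inj: "inj_on (\<lambda>(ss0, s). ss0 @ [s]) (Supps K n \<times> Pow (paths K (Suc n)))"
    by (auto simp: inj_on_def)
  show ?thesis unfolding img sum.reindex[OF inj] sum.cartesian_product by (simp add: case_prod_beta)
qed

lemma total:
  assumes "1 \<le> n" "n \<le> T" "x \<in> paths K T"
  shows "(\<Sum>ss\<in>Supps K n. Qf K N nu f g T n x ss) = post K nu f g T x"
  using assms(1,2)
proof (induction n rule: dec_induct)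
  case base
  have "(\<Sum>ss\<in>Supps K 1. Qf K N nu f g T 1 x ss) = (\<Sum>ss0\<in>Supps K 0. \<Sum>s\<in>Pow (paths K 1). Qf K N nu f g T 1 x (ss0 @ [s]))"
    using sum_Supps_Suc[of "\<lambda>ss. Qf K N nu f g T 1 x ss" 0] by simp
  also have "Supps K 0 = {[]}" unfolding Supps_def by auto
  also have "(\<Sum>ss0\<in>{[]}. \<Sum>s\<in>Pow (paths K 1). Qf K N nu f g T 1 x (ss0 @ [s]))
      = (\<Sum>s\<in>Pow (paths K 1). post K nu f g T x * (if s = paths K 1 then 1 else 0))"
    by (simp add: Qf_def psi_def)
  also have "\<dots> = post K nu f g T x * (\<Sum>s\<in>Pow (paths K 1). if s = paths K 1 then 1 else 0)"
    by (simp only: sum_distrib_left)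
  also have "(\<Sum>s\<in>Pow (paths K 1). if s = paths K 1 then 1 else 0) = (1::real)"
    using finite_paths[of K 1] by (simp add: sum.delta')
  finally show ?case by simp
next
  case (step n)
  have "(\<Sum>ss\<in>Supps K (Suc n). Qf K N nu f g T (Suc n) x ss)
      = (\<Sum>ss0\<in>Supps K n. \<Sum>s\<in>Pow (paths K (Suc n)). Qf K N nu f g T (Suc n) x (ss0 @ [s]))"
    by (rule sum_Supps_Suc)
  also have "\<dots> = (\<Sum>ss0\<in>Supps K n. Qf K N nu f g T n x ss0)"
    using step assms(3) by (intro sum.cong refl marg) auto
  finally show ?case using step by simp
qed

lemma btail_step:
  assumes ss: "ss \<in> Supps K T" and n: "1 \<le> n" "n < T" and r': "length r' = T - Suc n"
  shows "btail K N nu f g T ss (T - n) (a # r') =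
    (\<Sum>z\<in>ss!n. if last z = a then bsout K N nu f g T ss (Suc n) (z @ r') else 0)"
proof -
  have zlen: "z \<in> ss!n \<Longrightarrow> length z = Suc n" for z
    using Supps_sub[OF ss, of "Suc n"] n paths_len by auto
  show ?thesis
  proof (cases "T = Suc n")
    case True
    then have r0: "r' = []" using r' by simp
    have "T - n = Suc 0" using True by simp
    then have "btail K N nu f g T ss (T - n) (a # r') = (\<Sum>z\<in>ss!(T-1). if last z = a then Wt K N nu f g ss T z else 0)"
      by simp
    also have "\<dots> = (\<Sum>z\<in>ss!n. if last z = a then bsout K N nu f g T ss (Suc n) (z @ r') else 0)"
      using True unfolding r0 by (intro sum.cong) (auto simp: bsout_def)
    finally show ?thesis .
  next
    case False
    define j where "j = T - Suc (Suc n)"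
    have j: "T - Suc n = Suc j" using False n unfolding j_def by simp
    have Tn: "T - n = Suc (Suc j)" using j by simp
    have n': "T - Suc j = Suc n" using j n by simp
    have n'': "T - Suc j - 1 = n" using n' by simp
    have "btail K N nu f g T ss (T - n) (a # r') =
       btail K N nu f g T ss (Suc j) r' * (\<Sum>z\<in>ss!n. if last z = a then Vb K N nu f g T ss (Suc n) r' z / (\<Sum>u\<in>ss!n. Vb K N nu f g T ss (Suc n) r' u) else 0)"
      unfolding Tn by (simp only: btail.simps Let_def n' list.sel diff_Suc_1 diff_Suc_Suc minus_nat.diff_0 One_nat_def)
    also have "\<dots> = (\<Sum>z\<in>ss!n. if last z = a then btail K N nu f g T ss (Suc j) r' * (Vb K N nu f g T ss (Suc n) r' z / (\<Sum>u\<in>ss!n. Vb K N nu f g T ss (Suc n) r' u)) else 0)"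
      unfolding sum_distrib_left by (intro sum.cong refl) simp
    also have "\<dots> = (\<Sum>z\<in>ss!n. if last z = a then bsout K N nu f g T ss (Suc n) (z @ r') else 0)"
    proof (rule sum.cong[OF refl])
      fix z assume z: "z \<in> ss!n"
      have lz: "length z = Suc n" using zlen[OF z] .
      have "bsout K N nu f g T ss (Suc n) (z @ r') = btail K N nu f g T ss (Suc j) r' * (Vb K N nu f g T ss (Suc n) r' z / (\<Sum>u\<in>ss!n. Vb K N nu f g T ss (Suc n) r' u))"
        unfolding bsout_def using False z lz j by (simp add: Let_def)
      then show "(if last z = a then btail K N nu f g T ss (Suc j) r' * (Vb K N nu f g T ss (Suc n) r' z / (\<Sum>u\<in>ss!n. Vb K N nu f g T ss (Suc n) r' u)) else 0) =
          (if last z = a then bsout K N nu f g T ss (Suc n) (z @ r') else 0)" by simp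
    qed
    finally show ?thesis .
  qed
qed

end

lemma Vb_take:
  assumes "n \<le> k" shows "Vb K N nu f g T ss n r = Vb K N nu f g T (take k ss) n r"
proof -
  have e: "Wt K N nu f g ss n = Wt K N nu f g (take k ss) n" by (rule ext, rule Wt_take[OF assms])
  show ?thesis unfolding Vb_def e ..
qed

lemma Qf_ind0:
  assumes "1 \<le> n" "length ss0 = n" "take (Suc n) y \<notin> s"
  shows "Qf K N nu f g T (Suc n) y (ss0 @ [s]) = 0"
  using assms by (simp add: Qf_snoc)

lemma sum_restrict_sub:
  assumes "finite A" "B \<subseteq> A"
  shows "(\<Sum>p\<in>A. if p \<in> B then h p else (0::real)) = (\<Sum>p\<in>B. h p)"
proof -
  have "(\<Sum>p\<in>A. if p \<in> B then h p else (0::real)) = (\<Sum>p\<in>A \<inter> B. h p)"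
    using sum.inter_restrict[OF assms(1), of h B] by simp
  also have "A \<inter> B = B" using assms(2) by blast
  finally show ?thesis .
qed

context dpf begin

lemma inner:
  assumes sP: "s \<subseteq> paths K (Suc n)" and n: "1 \<le> n" and len: "length ss0 = n"
  shows "(\<Sum>z\<in>s. if last z = a then Qf K N nu f g T (Suc n) (z @ r') (ss0 @ [s]) else 0)
       = (\<Sum>q\<in>paths K n. Qf K N nu f g T (Suc n) (q @ a # r') (ss0 @ [s]))"
proof -
  have fins: "finite s" using sP finite_paths finite_subset by blast
  have "(\<Sum>q\<in>paths K n. Qf K N nu f g T (Suc n) (q @ a # r') (ss0 @ [s]))
      = (\<Sum>q\<in>paths K n. if q @ [a] \<in> s then Qf K N nu f g T (Suc n) ((q @ [a]) @ r') (ss0 @ [s]) else 0)"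
  proof (rule sum.cong[OF refl])
    fix q assume q: "q \<in> paths K n"
    have lq: "length q = n" using q by (rule paths_len)
    have tk: "take (Suc n) (q @ a # r') = q @ [a]" using lq by simp
    show "Qf K N nu f g T (Suc n) (q @ a # r') (ss0 @ [s]) =
        (if q @ [a] \<in> s then Qf K N nu f g T (Suc n) ((q @ [a]) @ r') (ss0 @ [s]) else 0)"
      using Qf_ind0[OF n len, of "q @ a # r'" s] tk by auto
  qed
  also have "\<dots> = (\<Sum>q\<in>{q\<in>paths K n. q @ [a] \<in> s}. Qf K N nu f g T (Suc n) ((q @ [a]) @ r') (ss0 @ [s]))"
    by (rule sum.inter_filter[symmetric]) (simp add: finite_paths)
  also have "\<dots> = (\<Sum>z\<in>(\<lambda>q. q @ [a]) ` {q\<in>paths K n. q @ [a] \<in> s}. Qf K N nu f g T (Suc n) (z @ r') (ss0 @ [s]))"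
    by (rule sum.reindex[symmetric, unfolded comp_def]) (auto simp: inj_on_def)
  also have "(\<lambda>q. q @ [a]) ` {q\<in>paths K n. q @ [a] \<in> s} = {z\<in>s. last z = a}"
  proof (intro equalityI subsetI)
    fix z assume "z \<in> (\<lambda>q. q @ [a]) ` {q\<in>paths K n. q @ [a] \<in> s}"
    then show "z \<in> {z\<in>s. last z = a}" by auto
  next
    fix z assume z: "z \<in> {z\<in>s. last z = a}"
    then have zP: "z \<in> paths K (Suc n)" using sP by blast
    then have lz: "length z = Suc n" by (rule paths_len)
    have zne: "z \<noteq> []" using lz by auto
    have la: "last z = a" using z by simp
    have ze: "butlast z @ [a] = z" using append_butlast_last_id[OF zne] unfolding la .
    have "butlast z \<in> paths K n" using zP lz unfolding paths_def by (auto dest: in_set_butlastD)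
    moreover have "butlast z @ [a] \<in> s" unfolding ze using z by simp
    ultimately have bz: "butlast z \<in> {q\<in>paths K n. q @ [a] \<in> s}" by simp
    show "z \<in> (\<lambda>q. q @ [a]) ` {q\<in>paths K n. q @ [a] \<in> s}"
      by (rule image_eqI[OF _ bz]) (simp only: ze)
  qed
  also have "(\<Sum>z\<in>{z\<in>s. last z = a}. Qf K N nu f g T (Suc n) (z @ r') (ss0 @ [s]))
      = (\<Sum>z\<in>s. if last z = a then Qf K N nu f g T (Suc n) (z @ r') (ss0 @ [s]) else 0)"
    by (rule sum.inter_filter[OF fins])
  finally show ?thesis ..
qed

end

context dpf begin

lemma MI:
  assumes i1: "1 \<le> i" and iT: "i \<le> T"
  shows "\<forall>ss0\<in>Supps K i. \<forall>x\<in>paths K T.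
    (\<Sum>ss\<in>Ext K T i ss0. (\<Sum>x0\<in>paths K T. piN K N nu f g T x0 ss) * bsout K N nu f g T ss i x)
      = Qf K N nu f g T i x ss0"
  using iT
proof (induction i rule: inc_induct)
  case base
  show ?case
  proof (intro ballI)
    fix ss0 x assume ss0: "ss0 \<in> Supps K T" and x: "x \<in> paths K T"
    have bs: "bsout K N nu f g T ss0 T x = (if x \<in> ss0!(T-1) then Wt K N nu f g ss0 T x else 0)"
      by (simp add: bsout_def)
    have L: "(\<Sum>ss\<in>Ext K T T ss0. (\<Sum>x0\<in>paths K T. piN K N nu f g T x0 ss) * bsout K N nu f g T ss T x)
        = (\<Sum>x0\<in>paths K T. Qf K N nu f g T T x0 ss0) * (if x \<in> ss0!(T-1) then Wt K N nu f g ss0 T x else 0)"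
      unfolding Ext_T[OF ss0] by (simp add: piN_Qf bs)
    show "(\<Sum>ss\<in>Ext K T T ss0. (\<Sum>x0\<in>paths K T. piN K N nu f g T x0 ss) * bsout K N nu f g T ss T x)
        = Qf K N nu f g T T x ss0"
    proof (cases "psi K N nu f g T ss0 = 0")
      case True
      then show ?thesis unfolding L by (simp add: Qf_psi0)
    next
      case False
      obtain \<mu> where mu: "\<And>p r. p \<in> paths K T \<Longrightarrow> r \<in> paths K (T-T) \<Longrightarrow>
          Qf K N nu f g T T (p @ r) ss0 = \<mu> * (if p \<in> ss0!(T-1) then Vb K N nu f g T ss0 T r p else 0)"
        using KF[OF ss0 T1 le_refl] by blast
      have nil: "[] \<in> paths K (T-T)" by (simp add: paths_def)
      have VbT: "Vb K N nu f g T ss0 T [] p = Wt K N nu f g ss0 T p" for p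
        by (simp add: Vb_def pfut_x_def pfut_y_def)
      have Qv: "Qf K N nu f g T T p ss0 = \<mu> * (if p \<in> ss0!(T-1) then Wt K N nu f g ss0 T p else 0)"
        if "p \<in> paths K T" for p
        using mu[OF that nil] VbT by simp
      have sub: "ss0!(T-1) \<subseteq> paths K T" using Supps_sub[OF ss0 T1 le_refl] .
      have S: "(\<Sum>x0\<in>paths K T. Qf K N nu f g T T x0 ss0) = \<mu> * (\<Sum>p\<in>ss0!(T-1). Wt K N nu f g ss0 T p)"
      proof -
        have "(\<Sum>x0\<in>paths K T. Qf K N nu f g T T x0 ss0) = (\<Sum>p\<in>paths K T. \<mu> * (if p \<in> ss0!(T-1) then Wt K N nu f g ss0 T p else 0))"
          using Qv by (intro sum.cong refl) auto
        also have "\<dots> = \<mu> * (\<Sum>p\<in>paths K T. if p \<in> ss0!(T-1) then Wt K N nu f g ss0 T p else 0)"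
          by (simp only: sum_distrib_left)
        also have "(\<Sum>p\<in>paths K T. if p \<in> ss0!(T-1) then Wt K N nu f g ss0 T p else 0) = (\<Sum>p\<in>ss0!(T-1). Wt K N nu f g ss0 T p)"
          by (rule sum_restrict_sub[OF finite_paths sub])
        finally show ?thesis .
      qed
      show ?thesis
      proof (cases "x \<in> ss0!(T-1)")
        case True
        have "ss0!(T-1) \<noteq> {}" using True by blast
        then have "(\<Sum>p\<in>ss0!(T-1). Wt K N nu f g ss0 T p) = 1" using good[OF ss0 T1 le_refl False] by blast
        then show ?thesis unfolding L S Qv[OF x] using True by simp
      next
        case notin: False
        then show ?thesis unfolding L Qv[OF x] by simp
      qed
    qed
  qed
next
  case (step n)
  have n1: "1 \<le> n" using step.hyps i1 by simp
  have nT: "n < T" using step.hyps by simp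
  show ?case
  proof (intro ballI)
    fix ss0 x assume ss0: "ss0 \<in> Supps K n" and x: "x \<in> paths K T"
    have len0: "length ss0 = n" using ss0 by (rule Supps_len)
    have lx: "length x = T" using x by (rule paths_len)
    define p where "p = take n x"
    define r where "r = drop n x"
    define a where "a = x ! n"
    define r' where "r' = drop (Suc n) x"
    have rr: "r = a # r'" unfolding r_def a_def r'_def using lx nT by (simp add: Cons_nth_drop_Suc)
    have xpr: "x = p @ r" unfolding p_def r_def by simp
    have pP: "p \<in> paths K n" unfolding p_def using x nT by (intro paths_take) auto
    have rP: "r \<in> paths K (T - n)" unfolding r_def using x nT by (intro paths_split) auto
    have lr': "length r' = T - Suc n" unfolding r'_def using lx by simp
    have r'P: "r' \<in> paths K (T - Suc n)" unfolding r'_def using x nT by (intro paths_split) auto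
    define V0 where "V0 = Vb K N nu f g T ss0 n r"
    define coef where "coef = (if p \<in> ss0!(n-1) then V0 p / (\<Sum>u\<in>ss0!(n-1). V0 u) else 0)"
    define S where "S ss = (\<Sum>x0\<in>paths K T. piN K N nu f g T x0 ss)" for ss
    define G where "G ss z = (if last z = a then S ss * bsout K N nu f g T ss (Suc n) (z @ r') else 0)" for ss z
    have each: "S ss * bsout K N nu f g T ss n x = coef * (\<Sum>z\<in>ss!n. G ss z)" if ss: "ss \<in> Ext K T n ss0" for ss
    proof -
      have ssS: "ss \<in> Supps K T" and tk: "take n ss = ss0" using ss unfolding Ext_def by auto
      have Veq: "Vb K N nu f g T ss n r = V0" unfolding V0_def tk[symmetric] by (rule Vb_take) simp
      have lss: "length ss = T" using ssS by (rule Supps_len)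
      have nth1: "ss!(n-1) = ss0!(n-1)" unfolding tk[symmetric] using n1 lss nT by simp
      then have nth1': "ss!(n - Suc 0) = ss0!(n - Suc 0)" by simp
      have "bsout K N nu f g T ss n x = btail K N nu f g T ss (T - n) r * coef"
        unfolding bsout_def coef_def using nT by (simp add: Let_def Veq nth1' p_def[symmetric] r_def[symmetric])
      also have "btail K N nu f g T ss (T - n) r = (\<Sum>z\<in>ss!n. if last z = a then bsout K N nu f g T ss (Suc n) (z @ r') else 0)"
        unfolding rr by (rule btail_step[OF ssS n1 nT lr'])
      finally have "bsout K N nu f g T ss n x = (\<Sum>z\<in>ss!n. if last z = a then bsout K N nu f g T ss (Suc n) (z @ r') else 0) * coef" .
      then show ?thesis unfolding G_def by (simp add: sum_distrib_left sum_distrib_right mult_ac if_distrib cong: if_cong)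
    qed
    have "(\<Sum>ss\<in>Ext K T n ss0. S ss * bsout K N nu f g T ss n x) = coef * (\<Sum>ss\<in>Ext K T n ss0. \<Sum>z\<in>ss!n. G ss z)"
      using each by (simp add: sum_distrib_left)
    also have "(\<Sum>ss\<in>Ext K T n ss0. \<Sum>z\<in>ss!n. G ss z) = (\<Sum>s\<in>Pow (paths K (Suc n)). \<Sum>ss\<in>Ext K T (Suc n) (ss0 @ [s]). \<Sum>z\<in>ss!n. G ss z)"
      by (rule sum_Ext_split[OF ss0 nT])
    also have "\<dots> = (\<Sum>s\<in>Pow (paths K (Suc n)). \<Sum>z\<in>s. \<Sum>ss\<in>Ext K T (Suc n) (ss0 @ [s]). G ss z)"
    proof (rule sum.cong[OF refl])
      fix s assume s: "s \<in> Pow (paths K (Suc n))"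
      have "(\<Sum>ss\<in>Ext K T (Suc n) (ss0 @ [s]). \<Sum>z\<in>ss!n. G ss z) = (\<Sum>ss\<in>Ext K T (Suc n) (ss0 @ [s]). \<Sum>z\<in>s. G ss z)"
      proof (rule sum.cong[OF refl])
        fix ss assume "ss \<in> Ext K T (Suc n) (ss0 @ [s])"
        then have "take (Suc n) ss = ss0 @ [s]" unfolding Ext_def by auto
        then have "ss ! n = s" using len0 by (metis lessI nth_append_length nth_take)
        then show "(\<Sum>z\<in>ss!n. G ss z) = (\<Sum>z\<in>s. G ss z)" by simp
      qed
      also have "\<dots> = (\<Sum>z\<in>s. \<Sum>ss\<in>Ext K T (Suc n) (ss0 @ [s]). G ss z)" by (rule sum.swap)
      finally show "(\<Sum>ss\<in>Ext K T (Suc n) (ss0 @ [s]). \<Sum>z\<in>ss!n. G ss z) = (\<Sum>z\<in>s. \<Sum>ss\<in>Ext K T (Suc n) (ss0 @ [s]). G ss z)" .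
    qed
    also have "\<dots> = (\<Sum>s\<in>Pow (paths K (Suc n)). \<Sum>z\<in>s. if last z = a then Qf K N nu f g T (Suc n) (z @ r') (ss0 @ [s]) else 0)"
    proof (intro sum.cong refl)
      fix s z assume s: "s \<in> Pow (paths K (Suc n))" and z: "z \<in> s"
      have ss1: "ss0 @ [s] \<in> Supps K (Suc n)" using ss0 s Supps_snoc by auto
      have zP: "z \<in> paths K (Suc n)" using s z by blast
      have zr: "z @ r' \<in> paths K T" using paths_append[OF zP r'P] nT by simp
      have IH: "(\<Sum>ss\<in>Ext K T (Suc n) (ss0 @ [s]). S ss * bsout K N nu f g T ss (Suc n) (z @ r')) = Qf K N nu f g T (Suc n) (z @ r') (ss0 @ [s])"
        using step.IH ss1 zr unfolding S_def by blast
      show "(\<Sum>ss\<in>Ext K T (Suc n) (ss0 @ [s]). G ss z) = (if last z = a then Qf K N nu f g T (Suc n) (z @ r') (ss0 @ [s]) else 0)"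
        unfolding G_def using IH by simp
    qed
    also have "\<dots> = (\<Sum>s\<in>Pow (paths K (Suc n)). \<Sum>q\<in>paths K n. Qf K N nu f g T (Suc n) (q @ r) (ss0 @ [s]))"
      unfolding rr using n1 len0 by (intro sum.cong refl inner) auto
    also have "\<dots> = (\<Sum>q\<in>paths K n. \<Sum>s\<in>Pow (paths K (Suc n)). Qf K N nu f g T (Suc n) (q @ r) (ss0 @ [s]))"
      by (rule sum.swap)
    also have "\<dots> = (\<Sum>q\<in>paths K n. Qf K N nu f g T n (q @ r) ss0)"
    proof (rule sum.cong[OF refl])
      fix q assume q: "q \<in> paths K n"
      have "q @ r \<in> paths K T" using paths_append[OF q rP] nT by simp
      then show "(\<Sum>s\<in>Pow (paths K (Suc n)). Qf K N nu f g T (Suc n) (q @ r) (ss0 @ [s])) = Qf K N nu f g T n (q @ r) ss0"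
        by (rule marg[OF ss0 n1 nT])
    qed
    finally have main: "(\<Sum>ss\<in>Ext K T n ss0. S ss * bsout K N nu f g T ss n x) = coef * (\<Sum>q\<in>paths K n. Qf K N nu f g T n (q @ r) ss0)" .
    obtain \<mu> where mu: "\<And>p r. p \<in> paths K n \<Longrightarrow> r \<in> paths K (T-n) \<Longrightarrow>
          Qf K N nu f g T n (p @ r) ss0 = \<mu> * (if p \<in> ss0!(n-1) then Vb K N nu f g T ss0 n r p else 0)"
      and nn: "\<mu> \<noteq> 0 \<Longrightarrow> (\<forall>q\<in>ss0!(n-1). \<forall>r\<in>paths K (T-n). Vb K N nu f g T ss0 n r q \<ge> 0)"
      using KF[OF ss0 n1 less_imp_le[OF nT]] by blast
    have sub: "ss0!(n-1) \<subseteq> paths K n" using Supps_sub[OF ss0 n1 le_refl] .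
    have fin0: "finite (ss0!(n-1))" using Supps_fin[OF ss0 n1 le_refl] .
    have sumq: "(\<Sum>q\<in>paths K n. Qf K N nu f g T n (q @ r) ss0) = \<mu> * (\<Sum>u\<in>ss0!(n-1). V0 u)"
    proof -
      have "(\<Sum>q\<in>paths K n. Qf K N nu f g T n (q @ r) ss0) = (\<Sum>q\<in>paths K n. \<mu> * (if q \<in> ss0!(n-1) then V0 q else 0))"
        using mu rP unfolding V0_def by (intro sum.cong refl) auto
      also have "\<dots> = \<mu> * (\<Sum>q\<in>paths K n. if q \<in> ss0!(n-1) then V0 q else 0)" by (simp only: sum_distrib_left)
      also have "(\<Sum>q\<in>paths K n. if q \<in> ss0!(n-1) then V0 q else 0) = (\<Sum>u\<in>ss0!(n-1). V0 u)"
        by (rule sum_restrict_sub[OF finite_paths sub])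
      finally show ?thesis .
    qed
    have rhs: "Qf K N nu f g T n x ss0 = \<mu> * (if p \<in> ss0!(n-1) then V0 p else 0)"
      unfolding xpr V0_def using mu[OF pP rP] .
    have final: "coef * (\<mu> * (\<Sum>u\<in>ss0!(n-1). V0 u)) = \<mu> * (if p \<in> ss0!(n-1) then V0 p else 0)"
    proof (cases "p \<in> ss0!(n-1)")
      case False then show ?thesis unfolding coef_def by simp
    next
      case True
      show ?thesis
      proof (cases "(\<Sum>u\<in>ss0!(n-1). V0 u) = 0")
        case False then show ?thesis unfolding coef_def using True by simp
      next
        case z: True
        show ?thesis
        proof (cases "\<mu> = 0")
          case True then show ?thesis by simp
        next
          case False
          have "\<forall>q\<in>ss0!(n-1). V0 q \<ge> 0" using nn[OF False] rP unfolding V0_def by blast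
          then have "V0 p = 0" using z True fin0 sum_nonneg_eq_0_iff by blast
          then show ?thesis unfolding coef_def using z by simp
        qed
      qed
    qed
    show "(\<Sum>ss\<in>Ext K T n ss0. (\<Sum>x0\<in>paths K T. piN K N nu f g T x0 ss) * bsout K N nu f g T ss n x) = Qf K N nu f g T n x ss0"
      using main unfolding S_def sumq rhs final .
  qed
qed

theorem main:
  assumes m: "m \<in> {1..T}" and x: "x \<in> paths K T"
  shows "(\<Sum>ss\<in>Supps K T. \<Sum>x0\<in>paths K T. piN K N nu f g T x0 ss * bsout K N nu f g T ss m x)
         = post K nu f g T x"
proof -
  have m1: "1 \<le> m" "m \<le> T" using m by auto
  have "(\<Sum>ss\<in>Supps K T. \<Sum>x0\<in>paths K T. piN K N nu f g T x0 ss * bsout K N nu f g T ss m x)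
      = (\<Sum>ss\<in>Supps K T. (\<Sum>x0\<in>paths K T. piN K N nu f g T x0 ss) * bsout K N nu f g T ss m x)"
    by (simp add: sum_distrib_right)
  also have "\<dots> = (\<Sum>ss0\<in>Supps K m. \<Sum>ss\<in>Ext K T m ss0. (\<Sum>x0\<in>paths K T. piN K N nu f g T x0 ss) * bsout K N nu f g T ss m x)"
    by (rule sum_Supps_Ext[OF m1(2)])
  also have "\<dots> = (\<Sum>ss0\<in>Supps K m. Qf K N nu f g T m x ss0)"
    using MI[OF m1] x by (intro sum.cong refl) blast
  also have "\<dots> = post K nu f g T x" by (rule total[OF m1 x])
  finally show ?thesis .
qed

end

theorem proposition1:
  fixes K N T m :: nat
    and nu :: "nat \<Rightarrow> real"
    and f :: "nat list \<Rightarrow> nat \<Rightarrow> real"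
    and g :: "nat \<Rightarrow> nat list \<Rightarrow> real"
    and x :: "nat list"
  assumes "K \<ge> 1" and "T \<ge> 1" and "N \<ge> 2"
    and nu_nonneg: "\<And>a. a \<in> {1..K} \<Longrightarrow> nu a \<ge> 0"
    and nu_sum: "(\<Sum>a\<in>{1..K}. nu a) = 1"
    and f_nonneg: "\<And>xs n a. xs \<in> paths K n \<Longrightarrow> 1 \<le> n \<Longrightarrow> n < T \<Longrightarrow> a \<in> {1..K} \<Longrightarrow> f xs a \<ge> 0"
    and f_sum: "\<And>xs n. xs \<in> paths K n \<Longrightarrow> 1 \<le> n \<Longrightarrow> n < T \<Longrightarrow> (\<Sum>a\<in>{1..K}. f xs a) = 1"
    and g_nonneg: "\<And>xs n. xs \<in> paths K n \<Longrightarrow> 1 \<le> n \<Longrightarrow> n \<le> T \<Longrightarrow> g n xs \<ge> 0"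
    and support: "\<And>xs n. xs \<in> paths K n \<Longrightarrow> 1 \<le> n \<Longrightarrow> n \<le> T \<Longrightarrow> joint nu f g n xs > 0"
    and "m \<in> {1..T}"
    and "x \<in> paths K T"
  shows "(\<Sum>ss\<in>Supps K T. \<Sum>x0\<in>paths K T.
            piN K N nu f g T x0 ss * bsout K N nu f g T ss m x)
         = post K nu f g T x"
proof -
  have d: "dpf K N T nu f g"
  proof (rule dpf.intro)
    show "K \<ge> 1" by fact
    show "T \<ge> 1" by fact
    show "N \<ge> 2" by fact
    show "\<And>a. a \<in> {1..K} \<Longrightarrow> nu a \<ge> 0" by (rule nu_nonneg)
    show "\<And>xs n a. xs \<in> paths K n \<Longrightarrow> 1 \<le> n \<Longrightarrow> n < T \<Longrightarrow> a \<in> {1..K} \<Longrightarrow> f xs a \<ge> 0" by (rule f_nonneg)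
    show "\<And>xs n. xs \<in> paths K n \<Longrightarrow> 1 \<le> n \<Longrightarrow> n \<le> T \<Longrightarrow> g n xs \<ge> 0" by (rule g_nonneg)
    show "\<And>xs n. xs \<in> paths K n \<Longrightarrow> 1 \<le> n \<Longrightarrow> n \<le> T \<Longrightarrow> joint nu f g n xs > 0" by (rule support)
  qed
  show ?thesis by (rule dpf.main[OF d \<open>m \<in> {1..T}\<close> \<open>x \<in> paths K T\<close>])
qed

end
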